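(* Let $\vartheta$ be primitive, geometrically compatible and recognisable, let $\mu\in\mathcal M$ and let $\mathbf P$ be a probability choice for $\vartheta$. Then every $\nu\in\Pi^{-1}(\mu)\cap\mathcal M[\mathbf P]$ satisfies \[ R^\nu=\lambda_{\mu,\mathbf P}^{-1}M(\mathbf P)R^\mu . \] In particular this holds for $\nu=T_{\mathbf P}(\mu)$ (which belongs to $\Pi^{-1}(\mu)\cap\mathcal M[\mathbf P]$), and if $\mu,\mu'\in\mathcal M$ satisfy $R^\mu=R^{\mu'}$ then $R^{T_{\mathbf P}(\mu)}=R^{T_{\mathbf P}(\mu')}$.
   Context: Standing assumptions: $\mathcal A$ finite alphabet; $\vartheta$ a random substitution (letters to non-empty finite sets of non-empty words, extended to words by concatenation $\vartheta(u_1\cdots u_n)=\{w_1\cdots w_n:w_i\in\vartheta(u_i)\}$), $X_\vartheta$ its subshift (sequences all of whose subwords are subwords of words in some $\vartheta^n(a)$) with shift $S$, $[u]$ the cylinder of $u$ at position $0$. Primitive: some marginal (choice $\theta(a)\in\vartheta(a)$) of some $\vartheta^n$ has primitive substitution matrix $M_{ab}=|\theta(b)|_a$. Geometrically compatible: some $\lambda>1$ and positive row vector $L$ with $LM=\lambda L$ for the substitution matrix of every marginal. Recognisable: every $y\in X_\vartheta$ has a unique decomposition $S^{-k}y=\cdots v_{-1}.v_0v_1\cdots$ with $x\in X_\vartheta$, $v_i\in\vartheta(x_i)$, $0\le k<|v_0|$ (all unique). $\mathcal M$ is the set of shift-invariant Borel probability measures on $X_\vartheta$; $R^\mu=(\mu([a]))_{a\in\mathcal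 A}$ as a column vector. A probability choice $\mathbf P$ assigns to each $a$ a probability vector $(\mathbf P_{v,a})_{v\in\vartheta(a)}$; $M(\mathbf P)_{ab}=\sum_{v\in\vartheta(b)}\mathbf P_{v,b}|v|_a$. Let $A=\vartheta(X_\vartheta)$ (all concatenations $\cdots v_{-1}.v_0v_1\cdots$, $v_i\in\vartheta(x_i)$, $x\in X_\vartheta$); by recognisability $A$ is identified with $\{(x_i,v_i)_i: x\in X_\vartheta,v_i\in\vartheta(x_i)\}\subset\mathcal B^{\mathbb Z}$, $\mathcal B=\{(a,v):v\in\vartheta(a)\}$, with first return map $S_A$ corresponding to the shift and return time $r_A=|v_0|$; $[(a_1,v_1)\cdots(a_n,v_n)]$ denotes the corresponding cylinder in $A$. For $\nu\in\mathcal M$, $\nu_A=\nu(\cdot\cap A)/\nu(A)$. Desubstitution $\Pi:\mathcal M\to\mathcal M$: $\Pi(\nu)([a_1\cdots a_n])=\sum_{v_1,\dots,v_n}\nu_A([(a_1,v_1)\cdots(a_n,v_n)])$. $\mathcal M[\mathbf P]$ is the set of $\nu\in\mathcal M$ with $\nu_A([(a,v)])=\mathbf P_{v,a}\sum_{u\in\vartheta(a)}\nu_A([(a,u)])$ for all $a$ and $v\in\vartheta(a)$. For $\mu\in\mathcal M$, $\vartheta_{\mathbf P}(\mu)$ is the $S_A$-invariant probability on $A$ with $\vartheta_{\mathbf P}(\mu)([(a_1,v_1)\cdots(a_n,v_n)])=\mu([a_1\cdots a_n])\prod_i\mathbf P_{v_i,a_i}$; $\lambda_{\mu,\mathbf P}=\sum_a\mu([a])\sum_{v\in\vartheta(a)}\mathbf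 P_{v,a}|v|$; the $\mathbf P$-transfer $T_{\mathbf P}(\mu)\in\mathcal M$ is defined by $T_{\mathbf P}(\mu)(f)=\lambda_{\mu,\mathbf P}^{-1}\int_A\sum_{i=0}^{r_A-1}f\circ S^i\,d\vartheta_{\mathbf P}(\mu)$ for continuous $f$. *)

theory Defs
  imports "HOL-Probability.Probability" "HOL-Library.Sublist"
begin

type_synonym 'a rsub = "'a \<Rightarrow> 'a list set"

definition random_subst :: "'a rsub \<Rightarrow> bool" where
  "random_subst \<sigma> \<longleftrightarrow> (\<forall>a. finite (\<sigma> a) \<and> \<sigma> a \<noteq> {} \<and> [] \<notin> \<sigma> a)"

definition subst_word :: "'a rsub \<Rightarrow> 'a list \<Rightarrow> 'a list set" where
  "subst_word \<sigma> u = concat ` listset (map \<sigma> u)"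

primrec subst_pow :: "'a rsub \<Rightarrow> nat \<Rightarrow> 'a rsub" where
  "subst_pow \<sigma> 0 a = {[a]}"
| "subst_pow \<sigma> (Suc n) a = (\<Union>w\<in>subst_pow \<sigma> n a. subst_word \<sigma> w)"

definition marginal :: "'a rsub \<Rightarrow> ('a \<Rightarrow> 'a list) \<Rightarrow> bool" where
  "marginal \<sigma> \<theta> \<longleftrightarrow> (\<forall>a. \<theta> a \<in> \<sigma> a)"

definition subst_matrix :: "('a \<Rightarrow> 'a list) \<Rightarrow> 'a \<Rightarrow> 'a \<Rightarrow> nat" where
  "subst_matrix \<theta> a b = count_list (\<theta> b) a"

primrec matpow :: "('a::finite \<Rightarrow> 'a \<Rightarrow> nat) \<Rightarrow> nat \<Rightarrow> 'a \<Rightarrow> 'a \<Rightarrow> nat" where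
  "matpow M 0 a b = (if a = b then 1 else 0)"
| "matpow M (Suc k) a b = (\<Sum>c\<in>UNIV. M a c * matpow M k c b)"

definition primitive_matrix :: "('a::finite \<Rightarrow> 'a \<Rightarrow> nat) \<Rightarrow> bool" where
  "primitive_matrix M \<longleftrightarrow> (\<exists>k\<ge>1. \<forall>a b. matpow M k a b > 0)"

definition primitive :: "('a::finite) rsub \<Rightarrow> bool" where
  "primitive \<sigma> \<longleftrightarrow> (\<exists>n\<ge>1. \<exists>\<theta>. marginal (subst_pow \<sigma> n) \<theta> \<and> primitive_matrix (subst_matrix \<theta>))"

definition geom_compatible :: "('a::finite) rsub \<Rightarrow> bool" where
  "geom_compatible \<sigma> \<longleftrightarrow> (\<exists>(lam::real) L. lam > 1 \<and> (\<forall>a. L a > (0::real)) \<and>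
     (\<forall>\<theta>. marginal \<sigma> \<theta> \<longrightarrow>
        (\<forall>b. (\<Sum>a\<in>UNIV. L a * real (subst_matrix \<theta> a b)) = lam * L b)))"

definition shift :: "(int \<Rightarrow> 'a) \<Rightarrow> int \<Rightarrow> 'a" where
  "shift x = (\<lambda>i. x (i + 1))"

definition language :: "'a rsub \<Rightarrow> 'a list set" where
  "language \<sigma> = {u. \<exists>n a w. w \<in> subst_pow \<sigma> n a \<and> sublist u w}"

definition subword :: "(int \<Rightarrow> 'a) \<Rightarrow> int \<Rightarrow> nat \<Rightarrow> 'a list" where
  "subword x i n = map (\<lambda>j. x (i + int j)) [0..<n]"

definition subshift :: "'a rsub \<Rightarrow> (int \<Rightarrow> 'a) set" where
  "subshift \<sigma> = {x. \<forall>i n. subword x i n \<in> language \<sigma>}"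

definition cyl :: "'a list \<Rightarrow> (int \<Rightarrow> 'a) set" where
  "cyl u = {x. \<forall>i<length u. x (int i) = u ! i}"

definition PT :: "(int \<Rightarrow> 'a) topology" where
  "PT = product_topology (\<lambda>_. discrete_topology UNIV) UNIV"

definition Bor :: "(int \<Rightarrow> 'a) measure" where
  "Bor = sigma (topspace PT) {U. openin PT U}"

text \<open>Shift-invariant Borel probability measures on \<open>X_\<sigma>\<close>, realised as Borel probability
  measures on the full sequence space that are concentrated on \<open>X_\<sigma>\<close>.\<close>
definition inv_measures :: "'a rsub \<Rightarrow> (int \<Rightarrow> 'a) measure set" where
  "inv_measures \<sigma> = {\<nu>. prob_space \<nu> \<and> sets \<nu> = sets Bor \<and> emeasure \<nu> (subshift \<sigma>) = 1
                          \<and> distr \<nu> \<nu> shift = \<nu>}"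

definition freq :: "(int \<Rightarrow> 'a) measure \<Rightarrow> 'a \<Rightarrow> real" where
  "freq \<nu> a = measure \<nu> (cyl [a])"

definition pos :: "(int \<Rightarrow> 'a list) \<Rightarrow> int \<Rightarrow> int" where
  "pos v i = (if 0 \<le> i then (\<Sum>m\<in>{0..<i}. int (length (v m)))
              else - (\<Sum>m\<in>{i..<0}. int (length (v m))))"

text \<open>\<open>is_concat v y\<close>: \<open>y = \<cdots> v_{-1}.v_0 v_1 \<cdots>\<close> (with \<open>v_0\<close> starting at position 0).\<close>
definition is_concat :: "(int \<Rightarrow> 'a list) \<Rightarrow> (int \<Rightarrow> 'a) \<Rightarrow> bool" where
  "is_concat v y \<longleftrightarrow> (\<forall>i. \<forall>j<length (v i). y (pos v i + int j) = v i ! j)"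

definition recognisable :: "'a rsub \<Rightarrow> bool" where
  "recognisable \<sigma> \<longleftrightarrow> (\<forall>y\<in>subshift \<sigma>. \<exists>!(x, v, k). x \<in> subshift \<sigma> \<and> (\<forall>i. v i \<in> \<sigma> (x i))
       \<and> 0 \<le> k \<and> k < int (length (v 0)) \<and> is_concat v (\<lambda>i. y (i - k)))"

text \<open>Cylinder \<open>[(a_1,v_1)\<cdots>(a_n,v_n)]\<close> in \<open>A = \<sigma>(X_\<sigma>)\<close>; \<open>Acyl \<sigma> []\<close> is \<open>A\<close> itself.\<close>
definition Acyl :: "'a rsub \<Rightarrow> ('a \<times> 'a list) list \<Rightarrow> (int \<Rightarrow> 'a) set" where
  "Acyl \<sigma> w = {y. \<exists>x v. x \<in> subshift \<sigma> \<and> (\<forall>i. v i \<in> \<sigma> (x i)) \<and> is_concat v y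
                    \<and> (\<forall>i<length w. x (int i) = fst (w ! i) \<and> v (int i) = snd (w ! i))}"

abbreviation Aset :: "'a rsub \<Rightarrow> (int \<Rightarrow> 'a) set" where
  "Aset \<sigma> \<equiv> Acyl \<sigma> []"

definition Bset :: "'a rsub \<Rightarrow> ('a \<times> 'a list) set" where
  "Bset \<sigma> = {(a, v). v \<in> \<sigma> a}"

definition return_time :: "'a rsub \<Rightarrow> (int \<Rightarrow> 'a) \<Rightarrow> nat" where
  "return_time \<sigma> y = (THE n. \<exists>x v. x \<in> subshift \<sigma> \<and> (\<forall>i. v i \<in> \<sigma> (x i)) \<and> is_concat v y
                            \<and> n = length (v 0))"

definition first_return :: "'a rsub \<Rightarrow> (int \<Rightarrow> 'a) \<Rightarrow> (int \<Rightarrow> 'a)" where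
  "first_return \<sigma> y = (if y \<in> Aset \<sigma> then (shift ^^ return_time \<sigma> y) y else y)"

definition induced :: "'a rsub \<Rightarrow> (int \<Rightarrow> 'a) measure \<Rightarrow> (int \<Rightarrow> 'a) set \<Rightarrow> real" where
  "induced \<sigma> \<nu> E = measure \<nu> (E \<inter> Aset \<sigma>) / measure \<nu> (Aset \<sigma>)"

text \<open>Value of \<open>\<Pi>(\<nu>)\<close> on the cylinder \<open>[a_1\<cdots>a_n]\<close>.\<close>
definition desub_cyl :: "'a rsub \<Rightarrow> (int \<Rightarrow> 'a) measure \<Rightarrow> 'a list \<Rightarrow> real" where
  "desub_cyl \<sigma> \<nu> u = (\<Sum>vs\<in>listset (map \<sigma> u). induced \<sigma> \<nu> (Acyl \<sigma> (zip u vs)))"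

text \<open>\<open>\<Pi>(\<nu>) = \<mu>\<close> (a measure in \<open>\<M>\<close> is determined by its values on cylinders).\<close>
definition desub_to :: "'a rsub \<Rightarrow> (int \<Rightarrow> 'a) measure \<Rightarrow> (int \<Rightarrow> 'a) measure \<Rightarrow> bool" where
  "desub_to \<sigma> \<nu> \<mu> \<longleftrightarrow> (\<forall>u. desub_cyl \<sigma> \<nu> u = measure \<mu> (cyl u))"

definition prob_choice :: "'a rsub \<Rightarrow> ('a list \<Rightarrow> 'a \<Rightarrow> real) \<Rightarrow> bool" where
  "prob_choice \<sigma> P \<longleftrightarrow> (\<forall>a. (\<forall>v\<in>\<sigma> a. P v a \<ge> 0) \<and> (\<Sum>v\<in>\<sigma> a. P v a) = 1)"

definition MP :: "'a rsub \<Rightarrow> ('a list \<Rightarrow> 'a \<Rightarrow> real) \<Rightarrow> 'a \<Rightarrow> 'a \<Rightarrow> real" where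
  "MP \<sigma> P a b = (\<Sum>v\<in>\<sigma> b. P v b * real (count_list v a))"

definition in_MP :: "'a rsub \<Rightarrow> ('a list \<Rightarrow> 'a \<Rightarrow> real) \<Rightarrow> (int \<Rightarrow> 'a) measure \<Rightarrow> bool" where
  "in_MP \<sigma> P \<nu> \<longleftrightarrow> \<nu> \<in> inv_measures \<sigma> \<and>
     (\<forall>a. \<forall>v\<in>\<sigma> a. induced \<sigma> \<nu> (Acyl \<sigma> [(a, v)])
                    = P v a * (\<Sum>u\<in>\<sigma> a. induced \<sigma> \<nu> (Acyl \<sigma> [(a, u)])))"

definition lam :: "('a::finite) rsub \<Rightarrow> (int \<Rightarrow> 'a) measure \<Rightarrow> ('a list \<Rightarrow> 'a \<Rightarrow> real) \<Rightarrow> real" where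
  "lam \<sigma> \<mu> P = (\<Sum>a\<in>UNIV. freq \<mu> a * (\<Sum>v\<in>\<sigma> a. P v a * real (length v)))"

text \<open>\<open>is_thetaP \<sigma> P \<mu> m\<close>: \<open>m\<close> is the \<open>S_A\<close>-invariant probability measure \<open>\<sigma>_P(\<mu>)\<close> on \<open>A\<close>
  (realised as a Borel probability measure on the full space concentrated on \<open>A\<close>).\<close>
definition is_thetaP :: "'a rsub \<Rightarrow> ('a list \<Rightarrow> 'a \<Rightarrow> real) \<Rightarrow> (int \<Rightarrow> 'a) measure
                           \<Rightarrow> (int \<Rightarrow> 'a) measure \<Rightarrow> bool" where
  "is_thetaP \<sigma> P \<mu> m \<longleftrightarrow> prob_space m \<and> sets m = sets Bor \<and> emeasure m (Aset \<sigma>) = 1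
     \<and> distr m m (first_return \<sigma>) = m
     \<and> (\<forall>w\<in>lists (Bset \<sigma>). measure m (Acyl \<sigma> w)
            = measure \<mu> (cyl (map fst w)) * prod_list (map (\<lambda>(a, v). P v a) w))"

text \<open>\<open>is_transfer \<sigma> P \<mu> m \<nu>\<close>: with \<open>m = \<sigma>_P(\<mu>)\<close>, \<open>\<nu> = T_P(\<mu>)\<close>.\<close>
definition is_transfer :: "('a::finite) rsub \<Rightarrow> ('a list \<Rightarrow> 'a \<Rightarrow> real) \<Rightarrow> (int \<Rightarrow> 'a) measure
                           \<Rightarrow> (int \<Rightarrow> 'a) measure \<Rightarrow> (int \<Rightarrow> 'a) measure \<Rightarrow> bool" where
  "is_transfer \<sigma> P \<mu> m \<nu> \<longleftrightarrow> is_thetaP \<sigma> P \<mu> m \<and> \<nu> \<in> inv_measures \<sigma> \<and>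
     (\<forall>f. continuous_map PT euclideanreal f \<longrightarrow>
        (\<integral>x. f x \<partial>\<nu>) = (1 / lam \<sigma> \<mu> P) *
           (\<integral>y. indicator (Aset \<sigma>) y * (\<Sum>i<return_time \<sigma> y. f ((shift ^^ i) y)) \<partial>m))"

end

theory Submission
  imports Defs "HOL-Analysis.Analysis"
begin

lemma topspace_PT[simp]: "topspace PT = UNIV"
  by (simp add: PT_def)

lemma space_Bor[simp]: "space Bor = UNIV"
  by (simp add: Bor_def)

lemma sets_Bor: "sets Bor = sigma_sets UNIV {U. openin PT U}"
  by (simp add: Bor_def sets_measure_of_conv)

lemma openin_Bor: "openin PT U \<Longrightarrow> U \<in> sets Bor"
  by (simp add: sets_Bor)

lemma closedin_Bor: "closedin PT U \<Longrightarrow> U \<in> sets Bor"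
proof -
  assume "closedin PT U"
  then have "openin PT (UNIV - U)" by (simp add: closedin_def)
  then have "UNIV - U \<in> sigma_sets UNIV {U. openin PT U}" by auto
  then have "UNIV - (UNIV - U) \<in> sigma_sets UNIV {U. openin PT U}"
    by (rule sigma_sets.Compl)
  moreover have "UNIV - (UNIV - U) = U" by auto
  ultimately show ?thesis by (simp add: sets_Bor)
qed

lemma cont_meas: fixes f :: "(int \<Rightarrow> 'a) \<Rightarrow> (int \<Rightarrow> 'b)" shows "continuous_map PT PT f \<Longrightarrow> f \<in> measurable Bor Bor"
proof -
  assume c: "continuous_map PT PT f"
  show ?thesis unfolding Bor_def
  proof (rule measurable_measure_of)
    fix y :: "(int \<Rightarrow> 'b) set" assume "y \<in> {U. openin PT U}"
    then have "openin PT {x \<in> topspace PT. f x \<in> y}"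
      using c by (intro openin_continuous_map_preimage) auto
    then have "f -` y \<in> sets Bor" by (intro openin_Bor) (simp add: vimage_def)
    then show "f -` y \<inter> space (sigma (topspace PT) {U. openin PT U}) \<in> sets (sigma (topspace PT) {U. openin PT U})"
      by (simp add: Bor_def)
  qed (auto simp: openin_subset)
qed

lemma cont_meas_real: "continuous_map PT euclideanreal f \<Longrightarrow> f \<in> borel_measurable Bor"
proof (rule borel_measurableI)
  fix S :: "real set" assume c: "continuous_map PT euclideanreal f" and "open S"
  then have "openin PT {x \<in> topspace PT. f x \<in> S}"
    using openin_continuous_map_preimage[OF c, of S] open_openin[of S] \<open>open S\<close> by blast
  then show "f -` S \<inter> space Bor \<in> sets Bor" by (intro openin_Bor) (simp add: vimage_def)
qed

definition TT :: "'b set \<Rightarrow> (int \<Rightarrow> 'b) topology" where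
  "TT F = product_topology (\<lambda>_. discrete_topology F) UNIV"

lemma topspace_TT: "topspace (TT F) = {p. \<forall>i. p i \<in> F}"
  by (auto simp: TT_def PiE_UNIV_domain)

lemma PT_TT: "PT = TT UNIV" by (simp add: PT_def TT_def)

lemma openin_TT_coord: assumes "c \<in> F" shows "openin (TT F) {p \<in> topspace (TT F). p j = c}"
proof -
  have "continuous_map (TT F) (discrete_topology F) (\<lambda>p. p j)"
    unfolding TT_def by (rule continuous_map_product_projection) simp
  then have "openin (TT F) {p \<in> topspace (TT F). p j \<in> {c}}"
    by (rule openin_continuous_map_preimage) (use assms in simp)
  then show ?thesis by simp
qed

lemma openin_TT_dep:
  assumes fin: "finite J" and sub: "S \<subseteq> topspace (TT F)"
    and dep: "\<And>p q. p \<in> S \<Longrightarrow> q \<in> topspace (TT F) \<Longrightarrow> (\<forall>j\<in>J. p j = q j) \<Longrightarrow> q \<in> S"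
  shows "openin (TT F) S"
  unfolding openin_subopen[of _ S]
proof
  fix p assume p: "p \<in> S"
  let ?T = "topspace (TT F) \<inter> (\<Inter>j\<in>J. {q \<in> topspace (TT F). q j = p j})"
  have "openin (TT F) ?T"
  proof (cases "J = {}")
    case True then show ?thesis by simp
  next
    case False
    have "openin (TT F) (\<Inter>j\<in>J. {q \<in> topspace (TT F). q j = p j})"
      using fin False p sub by (intro openin_INT2 openin_TT_coord) (auto simp: topspace_TT)
    then show ?thesis by (simp add: openin_subset inf.absorb2)
  qed
  moreover have "p \<in> ?T" using p sub by auto
  moreover have "?T \<subseteq> S" using dep p by auto
  ultimately show "\<exists>T. openin (TT F) T \<and> p \<in> T \<and> T \<subseteq> S" by blast
qed

lemma clopen_TT_dep:
  assumes fin: "finite J" and sub: "S \<subseteq> topspace (TT F)"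
    and dep: "\<And>p q. p \<in> topspace (TT F) \<Longrightarrow> q \<in> topspace (TT F) \<Longrightarrow> (\<forall>j\<in>J. p j = q j) \<Longrightarrow> p \<in> S \<Longrightarrow> q \<in> S"
  shows "openin (TT F) S \<and> closedin (TT F) S"
proof
  show "openin (TT F) S" using fin sub dep by (intro openin_TT_dep[of J]) (auto dest: subsetD)
  have "openin (TT F) (topspace (TT F) - S)"
  proof (rule openin_TT_dep[OF fin])
    fix p q assume "p \<in> topspace (TT F) - S" "q \<in> topspace (TT F)" "\<forall>j\<in>J. p j = q j"
    then show "q \<in> topspace (TT F) - S" using dep[of q p] by auto
  qed auto
  then show "closedin (TT F) S" using sub by (simp add: closedin_def)
qed

lemma closed_PT_dep:
  assumes fin: "finite J"
    and dep: "\<And>p q. (\<forall>j\<in>J. p j = q j) \<Longrightarrow> p \<in> S \<Longrightarrow> q \<in> S"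
  shows "closedin PT S"
  using clopen_TT_dep[of J S UNIV] fin dep by (auto simp: PT_TT topspace_TT)

lemma open_PT_dep:
  assumes fin: "finite J"
    and dep: "\<And>p q. (\<forall>j\<in>J. p j = q j) \<Longrightarrow> p \<in> S \<Longrightarrow> q \<in> S"
  shows "openin PT S"
  using clopen_TT_dep[of J S UNIV] fin dep by (auto simp: PT_TT topspace_TT)

lemma closed_PT_crit:
  assumes "\<And>y. (\<forall>N::nat. \<exists>y'\<in>S. \<forall>i. \<bar>i\<bar> \<le> int N \<longrightarrow> y' i = y i) \<Longrightarrow> y \<in> S"
  shows "closedin PT S"
proof -
  have "\<forall>y\<in>UNIV - S. \<exists>T. openin PT T \<and> y \<in> T \<and> T \<subseteq> UNIV - S"
  proof
    fix y assume "y \<in> UNIV - S"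
    then obtain N :: nat where N: "\<forall>y'\<in>S. \<not> (\<forall>i. \<bar>i\<bar> \<le> int N \<longrightarrow> y' i = y i)"
      using assms by blast
    let ?T = "{y'. \<forall>i\<in>{-int N..int N}. y' i = y i}"
    have "openin PT ?T" by (rule open_PT_dep[of "{-int N..int N}"]) auto
    moreover have "?T \<subseteq> UNIV - S"
    proof
      fix z assume z: "z \<in> ?T"
      have "z \<notin> S"
      proof
        assume "z \<in> S"
        then obtain i where "\<bar>i\<bar> \<le> int N" "z i \<noteq> y i" using N by blast
        with z show False by (auto simp: abs_le_iff)
      qed
      then show "z \<in> UNIV - S" by simp
    qed
    moreover have "y \<in> ?T" by simp
    ultimately show "\<exists>T. openin PT T \<and> y \<in> T \<and> T \<subseteq> UNIV - S" by blast
  qed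
  then have "openin PT (UNIV - S)" by (subst openin_subopen) blast
  then show ?thesis by (simp add: closedin_def)
qed

lemma compact_TT: "finite F \<Longrightarrow> compact_space (TT F)"
  unfolding TT_def by (simp add: compact_space_product_topology compact_space_discrete_topology)

lemma normal_PT: "normal_space (PT :: (int \<Rightarrow> 'a::finite) topology)"
proof -
  have "compact_space (PT :: (int \<Rightarrow> 'a::finite) topology)" unfolding PT_TT by (rule compact_TT) simp
  moreover have "Hausdorff_space (PT :: (int \<Rightarrow> 'a::finite) topology)" unfolding PT_def by (simp add: Hausdorff_space_product_topology)
  ultimately show ?thesis by (simp add: compact_Hausdorff_or_regular_imp_normal_space)
qed

definition sh :: "int \<Rightarrow> (int \<Rightarrow> 'a) \<Rightarrow> (int \<Rightarrow> 'a)" where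
  "sh k y = (\<lambda>i. y (i + k))"

lemma cont_sh: "continuous_map PT PT (sh k)"
  unfolding PT_def sh_def continuous_map_componentwise_UNIV
  by (auto intro: continuous_map_product_projection)

lemma shift_sh: "shift = sh 1" by (simp add: shift_def sh_def fun_eq_iff)
lemma sh_sh: "sh k (sh l y) = sh (k + l) y" by (simp add: sh_def ac_simps)
lemma sh_0[simp]: "sh 0 y = y" by (simp add: sh_def)
lemma shift_pow: "(shift ^^ n) y = sh (int n) y"
  by (induction n arbitrary: y) (auto simp: shift_sh sh_sh add.commute)

lemma subword_Suc: "subword y i (Suc n) = subword y i n @ [y (i + int n)]"
  by (simp add: subword_def)

lemma subword_add: "subword y i (a + b) = subword y i a @ subword y (i + int a) b"
proof (induction b)
  case 0 then show ?case by (simp add: subword_def)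
next
  case (Suc b)
  have "subword y i (a + Suc b) = subword y i (Suc (a + b))" by simp
  then show ?case using Suc by (simp add: subword_Suc ac_simps)
qed

lemma length_subword[simp]: "length (subword y i n) = n" by (simp add: subword_def)

lemma nth_subword[simp]: "k < n \<Longrightarrow> subword y i n ! k = y (i + int k)"
  by (simp add: subword_def)

lemma subword_sublist:
  assumes "p \<le> j" "j + int n \<le> p + int M"
  shows "sublist (subword y j n) (subword y p M)"
proof -
  define a where "a = nat (j - p)"
  define b where "b = M - a - n"
  have M: "M = a + n + b" using assms by (simp add: a_def b_def)
  have j: "j = p + int a" using assms by (simp add: a_def)
  have "subword y p M = subword y p a @ subword y j n @ subword y (j + int n) b"
    unfolding M subword_add j by (simp add: add.assoc)
  then show ?thesis by simp
qed

lemma lang_sublist: "sublist u w \<Longrightarrow> w \<in> language \<sigma> \<Longrightarrow> u \<in> language \<sigma>"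
  unfolding language_def by (auto intro: sublist_order.order_trans)

lemma subst_word_Nil[simp]: "subst_word \<sigma> [] = {[]}"
  by (simp add: subst_word_def)

lemma subst_word_Cons: "subst_word \<sigma> (c # u) = {a @ b |a b. a \<in> \<sigma> c \<and> b \<in> subst_word \<sigma> u}"
  by (auto simp: subst_word_def set_Cons_def image_def) (blast, metis concat.simps(2))

lemma subst_word_append:
  "subst_word \<sigma> (u1 @ u2) = {a @ b |a b. a \<in> subst_word \<sigma> u1 \<and> b \<in> subst_word \<sigma> u2}"
proof (induction u1)
  case Nil then show ?case by simp
next
  case (Cons c u1)
  show ?case
    unfolding append_Cons subst_word_Cons Cons
    by (auto, metis append.assoc, metis append.assoc)
qed

lemma subst_word_ne: "random_subst \<sigma> \<Longrightarrow> \<exists>w. w \<in> subst_word \<sigma> u"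
proof (induction u)
  case Nil then show ?case by simp
next
  case (Cons c u)
  then obtain b where "b \<in> subst_word \<sigma> u" by auto
  moreover obtain a where "a \<in> \<sigma> c" using Cons.prems by (auto simp: random_subst_def)
  ultimately show ?case by (auto simp: subst_word_Cons)
qed

lemma lang_subst:
  assumes rs: "random_subst \<sigma>" and u: "u \<in> language \<sigma>" and u': "u' \<in> subst_word \<sigma> u"
  shows "u' \<in> language \<sigma>"
proof -
  obtain n a w where w: "w \<in> subst_pow \<sigma> n a" "sublist u w" using u by (auto simp: language_def)
  then obtain w1 w2 where ww: "w = w1 @ u @ w2" by (auto simp: sublist_def)
  obtain w1' w2' where "w1' \<in> subst_word \<sigma> w1" "w2' \<in> subst_word \<sigma> w2"
    using subst_word_ne[OF rs] by blast
  then have "w1' @ u' @ w2' \<in> subst_word \<sigma> w"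
    unfolding ww subst_word_append using u' by blast
  then have "w1' @ u' @ w2' \<in> subst_pow \<sigma> (Suc n) a" using w(1) by auto
  then show ?thesis unfolding language_def by blast
qed

lemma pos_0[simp]: "pos v 0 = 0" by (simp add: pos_def)

lemma pos_Suc: "pos v (i + 1) = pos v i + int (length (v i))"
proof (cases "0 \<le> i")
  case True
  have "{0..<i+1} = insert i {0..<i}" using True by auto
  then show ?thesis using True by (simp add: pos_def)
next
  case False
  show ?thesis
  proof (cases "i = -1")
    case True
    have "{-1..<0::int} = {-1}" by auto
    then show ?thesis using True by (simp add: pos_def)
  next
    case False': False
    have "{i..<0} = insert i {i+1..<0}" using False by auto
    then show ?thesis using False False' by (simp add: pos_def)
  qed
qed

lemma pos_mono_nat: "pos v i \<le> pos v (i + int m)"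
proof (induction m)
  case (Suc m)
  have "pos v (i + int (Suc m)) = pos v (i + int m) + int (length (v (i + int m)))"
    using pos_Suc[of v "i + int m"] by (simp add: ac_simps)
  then show ?case using Suc by simp
qed simp

lemma pos_ge:
  assumes "\<forall>i. v i \<noteq> []"
  shows "pos v (i + int m) \<ge> pos v i + int m"
proof (induction m)
  case (Suc m)
  have "pos v (i + int (Suc m)) = pos v (i + int m) + int (length (v (i + int m)))"
    using pos_Suc[of v "i + int m"] by (simp add: ac_simps)
  moreover have "length (v (i + int m)) \<ge> 1" using assms by (metis length_0_conv less_one not_less)
  ultimately show ?case using Suc by simp
qed simp

lemma pos_le_self:
  assumes "\<forall>i. v i \<noteq> []" "i \<le> 0" shows "pos v i \<le> i"
  using pos_ge[OF assms(1), of i "nat (- i)"] assms(2) by simp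

lemma pos_ge_self:
  assumes "\<forall>i. v i \<noteq> []" "0 \<le> i" shows "pos v i \<ge> i"
  using pos_ge[OF assms(1), of 0 "nat i"] assms(2) by simp

definition W :: "(int \<Rightarrow> 'a list) \<Rightarrow> int \<Rightarrow> nat \<Rightarrow> 'a list" where
  "W v i m = concat (map (\<lambda>t. v (i + int t)) [0..<m])"

lemma W_Suc: "W v i (Suc m) = W v i m @ v (i + int m)"
  by (simp add: W_def)

lemma concat_block_one:
  assumes "is_concat v y"
  shows "subword y (pos v i) (length (v i)) = v i"
  using assms by (intro nth_equalityI) (auto simp: is_concat_def)

lemma W_subword:
  assumes "is_concat v y"
  shows "W v i m = subword y (pos v i) (nat (pos v (i + int m) - pos v i))"
proof (induction m)
  case 0 then show ?case by (simp add: W_def subword_def)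
next
  case (Suc m)
  define a where "a = nat (pos v (i + int m) - pos v i)"
  have ps: "pos v (i + int (Suc m)) = pos v (i + int m) + int (length (v (i + int m)))"
    using pos_Suc[of v "i + int m"] by (simp add: ac_simps)
  have a: "pos v i + int a = pos v (i + int m)" using pos_mono_nat[of v i m] by (simp add: a_def)
  have "nat (pos v (i + int (Suc m)) - pos v i) = a + length (v (i + int m))"
    using ps pos_mono_nat[of v i m] by (simp add: a_def)
  then have "subword y (pos v i) (nat (pos v (i + int (Suc m)) - pos v i))
      = subword y (pos v i) a @ v (i + int m)"
    using concat_block_one[OF assms, of "i + int m"] by (simp add: subword_add a)
  then show ?case by (simp add: W_Suc Suc a_def)
qed

lemma W_subst:
  assumes "\<forall>j. v j \<in> \<sigma> (x j)"
  shows "W v i m \<in> subst_word \<sigma> (subword x i m)"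
proof (induction m)
  case 0 then show ?case by (simp add: W_def subword_def)
next
  case (Suc m)
  have "v (i + int m) \<in> subst_word \<sigma> [x (i + int m)]"
    using assms by (auto simp: subst_word_Cons)
  then show ?case unfolding W_Suc subword_Suc subst_word_append using Suc by blast
qed

lemma random_subst_ne: "random_subst \<sigma> \<Longrightarrow> v \<in> \<sigma> a \<Longrightarrow> v \<noteq> []"
  by (auto simp: random_subst_def)

lemma concat_in_subshift:
  assumes rs: "random_subst \<sigma>" and x: "x \<in> subshift \<sigma>" and v: "\<forall>i. v i \<in> \<sigma> (x i)"
    and c: "is_concat v y"
  shows "y \<in> subshift \<sigma>"
  unfolding subshift_def
proof (simp only: mem_Collect_eq, intro allI)
  fix j :: int and n :: nat
  have ne: "\<forall>i. v i \<noteq> []" using v rs by (metis random_subst_def)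
  define i1 where "i1 = min j 0"
  define i2 where "i2 = max (j + int n) 0"
  define m where "m = nat (i2 - i1)"
  have i12: "i1 + int m = i2" by (simp add: i1_def i2_def m_def)
  have p1: "pos v i1 \<le> j"
    using pos_le_self[OF ne, of j] by (cases "j \<le> 0") (auto simp: i1_def)
  have p2: "pos v i2 \<ge> j + int n"
    using pos_ge_self[OF ne, of "j + int n"] by (cases "0 \<le> j + int n") (auto simp: i2_def)
  have "sublist (subword y j n) (subword y (pos v i1) (nat (pos v i2 - pos v i1)))"
    by (rule subword_sublist) (use p1 p2 in auto)
  moreover have "subword y (pos v i1) (nat (pos v i2 - pos v i1)) = W v i1 m"
    using W_subword[OF c, of i1 m] i12 by simp
  moreover have "W v i1 m \<in> language \<sigma>"
    using lang_subst[OF rs _ W_subst[OF v]] x by (auto simp: subshift_def)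
  ultimately show "subword y j n \<in> language \<sigma>" by (metis lang_sublist)
qed

lemma Acyl_sub_A: "Acyl \<sigma> w \<subseteq> Aset \<sigma>"
  by (auto simp: Acyl_def)

lemma A_sub_X: "random_subst \<sigma> \<Longrightarrow> Aset \<sigma> \<subseteq> subshift \<sigma>"
  by (auto simp: Acyl_def intro: concat_in_subshift)

lemma subword_sh: "subword (sh k x) i n = subword x (i + k) n"
  by (simp add: subword_def sh_def ac_simps)

lemma X_sh: "x \<in> subshift \<sigma> \<Longrightarrow> sh k x \<in> subshift \<sigma>"
  by (simp add: subshift_def subword_sh)

lemma closed_X: "closedin PT (subshift \<sigma>)"
proof -
  have "subshift \<sigma> = \<Inter> (range (\<lambda>(i, n). {x. subword x i n \<in> language \<sigma>}))"
    by (auto simp: subshift_def)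
  moreover have "closedin PT {x. subword x i n \<in> language \<sigma>}" for i n
  proof (rule closed_PT_dep[of "{i..<i + int n}"])
    fix p q :: "int \<Rightarrow> 'a"
    assume "\<forall>j\<in>{i..<i + int n}. p j = q j" "p \<in> {x. subword x i n \<in> language \<sigma>}"
    moreover have "subword p i n = subword q i n" using calculation(1)
      by (auto simp: subword_def)
    ultimately show "q \<in> {x. subword x i n \<in> language \<sigma>}" by simp
  qed simp
  ultimately show ?thesis by (auto intro!: closedin_Inter)
qed

lemma pos_dep:
  assumes "\<forall>m\<in>{min 0 i..<max 0 i}. v m = v' m"
  shows "pos v i = pos v' i"
  using assms unfolding pos_def by (auto intro!: sum.cong)

lemma pos_bound:
  assumes "\<forall>m. length (v m) \<le> K"
  shows "\<bar>pos v i\<bar> \<le> \<bar>i\<bar> * int K"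
proof (cases "0 \<le> i")
  case True
  have "(\<Sum>m\<in>{0..<i}. int (length (v m))) \<le> (\<Sum>m\<in>{0..<i}. int K)"
    using assms by (intro sum_mono) auto
  then show ?thesis using True by (simp add: pos_def sum_nonneg)
next
  case False
  have "(\<Sum>m\<in>{i..<0}. int (length (v m))) \<le> (\<Sum>m\<in>{i..<0}. int K)"
    using assms by (intro sum_mono) auto
  then show ?thesis using False by (simp add: pos_def sum_nonneg)
qed

definition valid :: "'a rsub \<Rightarrow> (int \<Rightarrow> 'a) \<Rightarrow> (int \<Rightarrow> 'a) \<Rightarrow> (int \<Rightarrow> 'a list) \<Rightarrow> int \<Rightarrow> bool" where
  "valid \<sigma> y x v k \<longleftrightarrow> x \<in> subshift \<sigma> \<and> (\<forall>i. v i \<in> \<sigma> (x i))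
       \<and> 0 \<le> k \<and> k < int (length (v 0)) \<and> is_concat v (\<lambda>i. y (i - k))"

lemma rec_ex:
  assumes "recognisable \<sigma>" "y \<in> subshift \<sigma>"
  obtains x v k where "valid \<sigma> y x v k"
proof -
  define P where "P = (\<lambda>(x, v, k). x \<in> subshift \<sigma> \<and> (\<forall>i. v i \<in> \<sigma> (x i))
       \<and> 0 \<le> k \<and> k < int (length (v 0)) \<and> is_concat v (\<lambda>i. y (i - k)))"
  have "\<exists>!t. P t"
    unfolding P_def by (rule bspec[OF assms(1)[unfolded recognisable_def] assms(2)])
  then obtain t where "P t" by (rule ex1E)
  moreover obtain x v k where "t = (x, v, k)" by (rule prod_cases3)
  ultimately have "valid \<sigma> y x v k" by (simp add: P_def valid_def)
  then show ?thesis by (rule that)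
qed

lemma ex1_eq: "\<exists>!t. P t \<Longrightarrow> P a \<Longrightarrow> P b \<Longrightarrow> a = b"
  by blast

lemma rec_uniq:
  assumes "recognisable \<sigma>" "y \<in> subshift \<sigma>" "valid \<sigma> y x v k" "valid \<sigma> y x' v' k'"
  shows "x = x' \<and> v = v' \<and> k = k'"
proof -
  define P where "P = (\<lambda>(x, v, k). x \<in> subshift \<sigma> \<and> (\<forall>i. v i \<in> \<sigma> (x i))
       \<and> 0 \<le> k \<and> k < int (length (v 0)) \<and> is_concat v (\<lambda>i. y (i - k)))"
  have "\<exists>!t. P t"
    unfolding P_def by (rule bspec[OF assms(1)[unfolded recognisable_def] assms(2)])
  moreover have "P (x, v, k)" "P (x', v', k')" using assms(3,4) by (simp_all add: P_def valid_def)
  ultimately have "(x, v, k) = (x', v', k')" by (rule ex1_eq)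
  then show ?thesis by simp
qed

lemma sh_neg: "sh (- k) y = (\<lambda>i. y (i - k))"
  by (simp add: sh_def)

lemma valid_Acyl:
  assumes "valid \<sigma> y x v k"
  shows "sh (- k) y \<in> Acyl \<sigma> [(x 0, v 0)]"
proof -
  have "x \<in> subshift \<sigma> \<and> (\<forall>i. v i \<in> \<sigma> (x i)) \<and> is_concat v (sh (- k) y)
     \<and> (\<forall>i<length [(x 0, v 0)]. x (int i) = fst ([(x 0, v 0)] ! i) \<and> v (int i) = snd ([(x 0, v 0)] ! i))"
    using assms unfolding valid_def sh_neg by simp
  then show ?thesis unfolding Acyl_def mem_Collect_eq by (rule exI[of _ x, OF exI[of _ v]])
qed

lemma Acyl_valid:
  assumes "sh (- k) y \<in> Acyl \<sigma> [(b, u)]" "0 \<le> k" "k < int (length u)"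
  obtains x v where "valid \<sigma> y x v k" "x 0 = b" "v 0 = u"
proof -
  obtain x v where xv: "x \<in> subshift \<sigma>" "\<forall>i. v i \<in> \<sigma> (x i)" "is_concat v (sh (- k) y)"
    "\<forall>i<length [(b, u)]. x (int i) = fst ([(b, u)] ! i) \<and> v (int i) = snd ([(b, u)] ! i)"
    using assms(1) unfolding Acyl_def mem_Collect_eq by blast
  have "x 0 = b" "v 0 = u" using xv(4) by auto
  moreover have "valid \<sigma> y x v k" unfolding valid_def using xv assms(2,3) calculation by (simp add: sh_neg)
  ultimately show ?thesis using that by blast
qed

lemma valid_y0:
  assumes "valid \<sigma> y x v k"
  shows "y 0 = v 0 ! nat k"
proof -
  have c: "is_concat v (\<lambda>i. y (i - k))" and l: "nat k < length (v 0)" and k: "0 \<le> k"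
    using assms by (auto simp: valid_def)
  have "(\<lambda>i. y (i - k)) (pos v 0 + int (nat k)) = v 0 ! nat k"
    using c l unfolding is_concat_def by blast
  then show ?thesis using k by simp
qed

lemma Acyl_valid0:
  assumes rs: "random_subst \<sigma>" and y: "y \<in> Acyl \<sigma> w"
  obtains x v where "valid \<sigma> y x v 0" "is_concat v y"
    "\<forall>i<length w. x (int i) = fst (w ! i) \<and> v (int i) = snd (w ! i)"
proof -
  obtain x v where xv: "x \<in> subshift \<sigma>" "\<forall>i. v i \<in> \<sigma> (x i)" "is_concat v y"
    "\<forall>i<length w. x (int i) = fst (w ! i) \<and> v (int i) = snd (w ! i)"
    using y by (auto simp: Acyl_def)
  have "v 0 \<noteq> []" using xv(2) rs by (metis random_subst_def)
  then have "valid \<sigma> y x v 0" using xv by (simp add: valid_def)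
  then show ?thesis using that xv by blast
qed

lemma finite_Bset: "random_subst (\<sigma> :: ('a::finite) rsub) \<Longrightarrow> finite (Bset \<sigma>)"
proof -
  assume rs: "random_subst \<sigma>"
  have "Bset \<sigma> = (\<Union>a. (\<lambda>v. (a, v)) ` \<sigma> a)" by (auto simp: Bset_def)
  then show ?thesis using rs by (simp add: random_subst_def)
qed

lemma closed_Acyl:
  fixes \<sigma> :: "('a::finite) rsub"
  assumes rs: "random_subst \<sigma>"
  shows "closedin PT (Acyl \<sigma> w)"
proof (rule closed_PT_crit)
  fix y :: "int \<Rightarrow> 'a"
  assume H: "\<forall>N::nat. \<exists>y'\<in>Acyl \<sigma> w. \<forall>i. \<bar>i\<bar> \<le> int N \<longrightarrow> y' i = y i"
  define B where "B = Bset \<sigma>"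
  have finB: "finite B" using finite_Bset[OF rs] by (simp add: B_def)
  obtain K where K: "\<forall>p\<in>B. length (snd p) \<le> K"
    using finite_nat_set_iff_bounded_le[of "(\<lambda>p. length (snd p)) ` B"] finB by auto
  define T where "T = TT B"
  have topT: "topspace T = {p. \<forall>i. p i \<in> B}" by (simp add: T_def topspace_TT)
  define C1 where "C1 = (\<lambda>(i, n). {p \<in> topspace T. subword (fst \<circ> p) i n \<in> language \<sigma>})"
  define C2 where "C2 = (\<lambda>(i, j). {p \<in> topspace T. j < length (snd (p i)) \<longrightarrow>
                         y (pos (snd \<circ> p) i + int j) = snd (p i) ! j})"
  define C3 where "C3 = (\<lambda>k. {p \<in> topspace T. k < length w \<longrightarrow> p (int k) = w ! k})"
  define U where "U = range C1 \<union> range C2 \<union> range C3"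
  have cl1: "closedin T (C1 q)" for q
  proof -
    obtain i n where q: "q = (i, n)" by (cases q)
    show ?thesis unfolding T_def
    proof (rule conjunct2[OF clopen_TT_dep[of "{i..<i + int n}"]])
      fix p p' assume p: "p \<in> topspace (TT B)" "p' \<in> topspace (TT B)"
        "\<forall>j\<in>{i..<i + int n}. p j = p' j" "p \<in> C1 q"
      have "subword (fst \<circ> p) i n = subword (fst \<circ> p') i n"
        unfolding subword_def using p(3) by (auto intro!: map_cong)
      then show "p' \<in> C1 q" using p by (auto simp: C1_def q T_def)
    qed (auto simp: C1_def q T_def)
  qed
  have cl2: "closedin T (C2 q)" for q
  proof -
    obtain i j where q: "q = (i, j)" by (cases q)
    show ?thesis unfolding T_def
    proof (rule conjunct2[OF clopen_TT_dep[of "{min 0 i..max 0 i}"]])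
      fix p p' assume p: "p \<in> topspace (TT B)" "p' \<in> topspace (TT B)"
        "\<forall>j\<in>{min 0 i..max 0 i}. p j = p' j" "p \<in> C2 q"
      have "pos (snd \<circ> p) i = pos (snd \<circ> p') i"
        by (rule pos_dep) (use p(3) in auto)
      moreover have "p i = p' i" using p(3) by auto
      ultimately show "p' \<in> C2 q" using p by (auto simp: C2_def q T_def)
    qed (auto simp: C2_def q T_def)
  qed
  have cl3: "closedin T (C3 q)" for q
    unfolding T_def
    by (rule conjunct2[OF clopen_TT_dep[of "{int q}"]]) (auto simp: C3_def T_def)
  have clU: "\<forall>C\<in>U. closedin T C" using cl1 cl2 cl3 by (auto simp: U_def)
  have fip: "\<Inter>F \<noteq> {}" if F: "finite F" "F \<subseteq> U" for F
  proof -
    have "finite (F \<inter> range C2)" using F by simp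
    then obtain Q where Q: "finite Q" "F \<inter> range C2 = C2 ` Q"
      using finite_subset_image[of "F \<inter> range C2" C2 UNIV] by blast
    define N where "N = (\<Sum>q\<in>Q. nat \<bar>fst q\<bar>)"
    have N: "\<bar>fst q\<bar> \<le> int N" if "q \<in> Q" for q
    proof -
      have "nat \<bar>fst q\<bar> \<le> N" unfolding N_def by (rule member_le_sum) (use that Q in auto)
      then show ?thesis by simp
    qed
    obtain y' where y': "y' \<in> Acyl \<sigma> w" "\<forall>i. \<bar>i\<bar> \<le> int ((N + 1) * K) \<longrightarrow> y' i = y i"
      using H by blast
    obtain x v where xv: "x \<in> subshift \<sigma>" "\<forall>i. v i \<in> \<sigma> (x i)" "is_concat v y'"
      "\<forall>i<length w. x (int i) = fst (w ! i) \<and> v (int i) = snd (w ! i)"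
      using y'(1) by (auto simp: Acyl_def)
    define p where "p = (\<lambda>i. (x i, v i))"
    have pT: "p \<in> topspace T" using xv(2) by (simp add: topT p_def B_def Bset_def)
    have vK: "\<forall>m. length (v m) \<le> K" using K xv(2) by (auto simp: B_def Bset_def)
    have "p \<in> C" if CF: "C \<in> F" for C
    proof -
      have "C \<in> U" using CF F by auto
      then have "C \<in> range C1 \<or> C \<in> range C2 \<or> C \<in> range C3" by (simp add: U_def)
      then consider (a) q where "C = C1 q" | (b) q where "C = C2 q" "q \<in> Q" | (c) q where "C = C3 q"
      proof (elim disjE)
        assume "C \<in> range C1"
        then obtain q where "C = C1 q" by blast
        then show thesis by (rule that(1))
      next
        assume "C \<in> range C2"
        then have "C \<in> F \<inter> range C2" using CF by simp
        then have "C \<in> C2 ` Q" using Q(2) by simp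
        then obtain q where "C = C2 q" "q \<in> Q" by blast
        then show thesis by (rule that(2))
      next
        assume "C \<in> range C3"
        then obtain q where "C = C3 q" by blast
        then show thesis by (rule that(3))
      qed
      then show ?thesis
      proof cases
        case a
        obtain i n where q: "q = (i, n)" by (cases q)
        have "fst \<circ> p = x" by (simp add: p_def comp_def)
        then show ?thesis using pT xv(1) a by (simp add: C1_def q subshift_def)
      next
        case b
        obtain i j where q: "q = (i, j)" by (cases q)
        have "\<bar>i\<bar> \<le> int N" using N[OF b(2)] q by simp
        have "j < length (v i) \<longrightarrow> y (pos v i + int j) = v i ! j"
        proof
          assume j: "j < length (v i)"
          have "\<bar>pos v i\<bar> \<le> \<bar>i\<bar> * int K" by (rule pos_bound[OF vK])
          also have "\<dots> \<le> int N * int K" using \<open>\<bar>i\<bar> \<le> int N\<close> by (intro mult_right_mono) auto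
          finally have a: "\<bar>pos v i\<bar> \<le> int N * int K" .
          have b: "int j \<le> int K" using j vK[rule_format, of i] by simp
          have c: "int ((N + 1) * K) = int N * int K + int K" by (simp add: algebra_simps)
          have d: "\<bar>pos v i + int j\<bar> \<le> \<bar>pos v i\<bar> + int j" using abs_triangle_ineq[of "pos v i" "int j"] by simp
          have "\<bar>pos v i + int j\<bar> \<le> int ((N + 1) * K)" using a b c d by linarith
          then have "y (pos v i + int j) = y' (pos v i + int j)" using y'(2) by simp
          then show "y (pos v i + int j) = v i ! j" using xv(3) j by (simp add: is_concat_def)
        qed
        then show ?thesis using pT b by (simp add: C2_def q p_def comp_def)
      next
        case c
        then show ?thesis using pT xv(4) by (auto simp: C3_def p_def prod_eq_iff)
      qed
    qed
    then show ?thesis by blast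
  qed
  have cT: "compact_space T" unfolding T_def by (rule compact_TT[OF finB])
  obtain p where p: "p \<in> \<Inter>U"
    using cT clU fip unfolding compact_space_fip by blast
  have "C3 0 \<in> U" by (simp add: U_def)
  then have "p \<in> C3 0" using p by blast
  then have pT: "p \<in> topspace T" by (simp add: C3_def)
  define x where "x = fst \<circ> p"
  define v where "v = snd \<circ> p"
  have "x \<in> subshift \<sigma>" unfolding subshift_def
  proof (simp only: mem_Collect_eq, intro allI)
    fix i :: int and n :: nat
    have "C1 (i, n) \<in> U" by (simp add: U_def)
    then have "p \<in> C1 (i, n)" using p by blast
    then show "subword x i n \<in> language \<sigma>" by (simp add: C1_def x_def)
  qed
  moreover have "\<forall>i. v i \<in> \<sigma> (x i)"
  proof
    fix i
    have "p i \<in> Bset \<sigma>" using pT by (simp add: topT B_def)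
    then show "v i \<in> \<sigma> (x i)" by (cases "p i") (simp add: Bset_def v_def x_def)
  qed
  moreover have "is_concat v y"
    unfolding is_concat_def
  proof (intro allI impI)
    fix i j assume "j < length (v i)"
    moreover have "C2 (i, j) \<in> U" by (simp add: U_def)
    then have "p \<in> C2 (i, j)" using p by blast
    ultimately show "y (pos v i + int j) = v i ! j" by (simp add: C2_def v_def)
  qed
  moreover have "\<forall>i<length w. x (int i) = fst (w ! i) \<and> v (int i) = snd (w ! i)"
  proof (intro allI impI)
    fix i assume "i < length w"
    moreover have "C3 i \<in> U" by (simp add: U_def)
    then have "p \<in> C3 i" using p by blast
    ultimately show "x (int i) = fst (w ! i) \<and> v (int i) = snd (w ! i)" by (simp add: C3_def x_def v_def)
  qed
  ultimately have conj: "x \<in> subshift \<sigma> \<and> (\<forall>i. v i \<in> \<sigma> (x i)) \<and> is_concat v y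
      \<and> (\<forall>i<length w. x (int i) = fst (w ! i) \<and> v (int i) = snd (w ! i))"
    by (intro conjI)
  show "y \<in> Acyl \<sigma> w" unfolding Acyl_def mem_Collect_eq
    by (rule exI[of _ x], rule exI[of _ v], rule conj)
qed

lemma inv_basic:
  assumes "\<nu> \<in> inv_measures \<sigma>"
  shows "prob_space \<nu>" "sets \<nu> = sets Bor" "space \<nu> = UNIV" "distr \<nu> \<nu> shift = \<nu>"
    "emeasure \<nu> (subshift \<sigma>) = 1"
proof -
  show sb: "sets \<nu> = sets Bor" using assms by (simp add: inv_measures_def)
  show "space \<nu> = UNIV" using sets_eq_imp_space_eq[OF sb] by simp
qed (use assms in \<open>auto simp: inv_measures_def\<close>)

lemma closed_sets: "closedin PT S \<Longrightarrow> \<nu> \<in> inv_measures \<sigma> \<Longrightarrow> S \<in> sets \<nu>"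
  using inv_basic(2) closedin_Bor by blast

lemma meas_sh: "\<nu> \<in> inv_measures \<sigma> \<Longrightarrow> sh k \<in> measurable \<nu> \<nu>"
  using cont_meas[OF cont_sh[of k]] inv_basic(2)[of \<nu> \<sigma>] measurable_cong_sets by blast

lemma sets_sh:
  assumes "\<nu> \<in> inv_measures \<sigma>" "S \<in> sets \<nu>" shows "sh k -` S \<in> sets \<nu>"
  using measurable_sets[OF meas_sh[OF assms(1), of k] assms(2)] inv_basic(3)[OF assms(1)] by simp

lemma inv_shift1:
  assumes "\<nu> \<in> inv_measures \<sigma>" "S \<in> sets \<nu>"
  shows "measure \<nu> (sh 1 -` S) = measure \<nu> S"
proof -
  have "measure (distr \<nu> \<nu> (sh 1)) S = measure \<nu> (sh 1 -` S \<inter> space \<nu>)"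
    by (rule measure_distr[OF meas_sh[OF assms(1)] assms(2)])
  then show ?thesis using inv_basic(3,4)[OF assms(1)] by (simp add: shift_sh)
qed

lemma sh_vimage: "sh (k + l) -` S = sh l -` (sh k -` S)"
  by (auto simp: sh_sh add.commute)

lemma inv_sh_nat:
  assumes "\<nu> \<in> inv_measures \<sigma>" "S \<in> sets \<nu>"
  shows "measure \<nu> (sh (int n) -` S) = measure \<nu> S"
proof (induction n)
  case (Suc n)
  have "sh (int (Suc n)) -` S = sh 1 -` (sh (int n) -` S)"
    by (metis of_nat_Suc add.commute sh_vimage)
  then show ?case using inv_shift1[OF assms(1) sets_sh[OF assms]] Suc by simp
qed simp

lemma inv_sh:
  assumes "\<nu> \<in> inv_measures \<sigma>" "S \<in> sets \<nu>"
  shows "measure \<nu> (sh k -` S) = measure \<nu> S"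
proof (cases "0 \<le> k")
  case True
  then show ?thesis using inv_sh_nat[OF assms, of "nat k"] by simp
next
  case False
  define n where "n = nat (- k)"
  have k: "k = - int n" using False by (simp add: n_def)
  have "sh (int n) -` (sh k -` S) = S" by (auto simp: k sh_sh)
  have S': "sh k -` S \<in> sets \<nu>" by (rule sets_sh[OF assms])
  then have "measure \<nu> (sh k -` S) = measure \<nu> S"
    using inv_sh_nat[OF assms(1) S', of n] \<open>sh (int n) -` (sh k -` S) = S\<close> by simp
  then show ?thesis .
qed

lemma AE_X:
  fixes \<sigma> :: "('a::finite) rsub"
  assumes "\<nu> \<in> inv_measures \<sigma>"
  shows "AE y in \<nu>. y \<in> subshift \<sigma>"
proof -
  interpret P: prob_space \<nu> by (rule inv_basic(1)[OF assms])
  have X: "subshift \<sigma> \<in> sets \<nu>" by (rule closed_sets[OF closed_X assms])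
  have "measure \<nu> (subshift \<sigma>) = 1" using inv_basic(5)[OF assms] by (simp add: measure_def)
  then show ?thesis using P.AE_in_set_eq_1[OF X] by simp
qed

lemma integrable_ind:
  assumes "\<nu> \<in> inv_measures \<sigma>" "S \<in> sets \<nu>"
  shows "integrable \<nu> (indicator S :: _ \<Rightarrow> real)"
proof -
  interpret P: prob_space \<nu> by (rule inv_basic(1)[OF assms(1)])
  show ?thesis using assms(2) inv_basic(3)[OF assms(1)]
    by (simp add: integrable_indicator_iff less_top[symmetric])
qed

lemma measure_ind:
  assumes "\<nu> \<in> inv_measures \<sigma>"
  shows "integral\<^sup>L \<nu> (indicator S :: _ \<Rightarrow> real) = measure \<nu> S"
  using inv_basic(3)[OF assms] by simp

lemma count_list_sum: "real (count_list u a) = (\<Sum>k<length u. of_bool (u ! k = a))"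
proof (induction u)
  case (Cons c u)
  have "(\<Sum>k<length (c # u). of_bool ((c # u) ! k = a) :: real)
      = of_bool (c = a) + (\<Sum>k<length u. of_bool (u ! k = a))"
    unfolding length_Cons sum.lessThan_Suc_shift nth_Cons_0 nth_Cons_Suc by simp
  then show ?case using Cons by simp
qed simp

lemma sum_delta2:
  fixes len :: "'p \<Rightarrow> nat"
  assumes fin: "finite B" and p0: "p0 \<in> B" and k: "k < len p0"
    and f: "\<And>p k'. p \<in> B \<Longrightarrow> k' < len p \<Longrightarrow> f p k' = (if p = p0 \<and> k' = k then c else 0)"
  shows "(\<Sum>p\<in>B. \<Sum>k'<len p. f p k') = (c :: real)"
proof -
  have "(\<Sum>p\<in>B. \<Sum>k'<len p. f p k') = (\<Sum>p\<in>B. if p = p0 then c else 0)"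
  proof (rule sum.cong)
    fix p assume p: "p \<in> B"
    have "(\<Sum>k'<len p. f p k') = (\<Sum>k'<len p. if p = p0 \<and> k' = k then c else 0)"
      using f p by (intro sum.cong) auto
    also have "\<dots> = (if p = p0 then c else 0)"
      using k by (cases "p = p0") (simp_all add: sum.delta)
    finally show "(\<Sum>k'<len p. f p k') = (if p = p0 then c else 0)" .
  qed simp
  also have "\<dots> = c" using fin p0 by (simp add: sum.delta)
  finally show ?thesis .
qed

lemma counting:
  fixes \<sigma> :: "('a::finite) rsub"
  assumes rs: "random_subst \<sigma>" and rec: "recognisable \<sigma>" and nu: "\<nu> \<in> inv_measures \<sigma>"
  shows "freq \<nu> a = (\<Sum>p\<in>Bset \<sigma>. real (count_list (snd p) a) * measure \<nu> (Acyl \<sigma> [p]))"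
proof -
  define B where "B = Bset \<sigma>"
  have finB: "finite B" using finite_Bset[OF rs] by (simp add: B_def)
  define E where "E = (\<lambda>p (k::nat). sh (- int k) -` Acyl \<sigma> [p])"
  define g where "g = (\<lambda>y. \<Sum>p\<in>B. \<Sum>k<length (snd p). of_bool (snd p ! k = a) * indicator (E p k) y :: real)"
  have AcS: "Acyl \<sigma> [p] \<in> sets \<nu>" for p by (rule closed_sets[OF closed_Acyl[OF rs] nu])
  have ES: "E p k \<in> sets \<nu>" for p k unfolding E_def by (rule sets_sh[OF nu AcS])
  have cylS: "cyl [a] \<in> sets \<nu>"
    by (rule closed_sets[OF closed_PT_dep[of "{0}"] nu]) (auto simp: cyl_def)
  have pw: "indicator (cyl [a]) y = g y" if yX: "y \<in> subshift \<sigma>" for y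
  proof -
    obtain x v k0 where val: "valid \<sigma> y x v k0" using rec_ex[OF rec yX] by blast
    define k where "k = nat k0"
    have k0: "k0 = int k" "k < length (v 0)" using val by (auto simp: valid_def k_def)
    define p0 where "p0 = (x 0, v 0)"
    have p0B: "p0 \<in> B" using val by (auto simp: valid_def B_def Bset_def p0_def)
    have memE: "y \<in> E p k' \<longleftrightarrow> p = p0 \<and> k' = k" if pB: "p \<in> B" and kl: "k' < length (snd p)" for p k'
    proof
      assume "y \<in> E p k'"
      then have "sh (- int k') y \<in> Acyl \<sigma> [(fst p, snd p)]" by (simp add: E_def)
      then obtain x' v' where xv': "valid \<sigma> y x' v' (int k')" "x' 0 = fst p" "v' 0 = snd p"
        using Acyl_valid kl by (metis of_nat_0_le_iff of_nat_less_iff)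
      have "x = x' \<and> v = v' \<and> k0 = int k'" by (rule rec_uniq[OF rec yX val xv'(1)])
      then show "p = p0 \<and> k' = k" using xv' k0 by (auto simp: p0_def prod_eq_iff)
    next
      assume "p = p0 \<and> k' = k"
      then show "y \<in> E p k'" using valid_Acyl[OF val] k0 by (simp add: E_def p0_def)
    qed
    have "g y = of_bool (snd p0 ! k = a)"
      unfolding g_def
    proof (rule sum_delta2[OF finB p0B, where len="\<lambda>p. length (snd p)"])
      show "k < length (snd p0)" using k0 by (simp add: p0_def)
      fix p k' assume pk: "p \<in> B" "k' < length (snd p)"
      have "indicator (E p k') y = (if p = p0 \<and> k' = k then 1 else 0 :: real)"
        using memE[OF pk] by (simp add: indicator_def)
      then show "of_bool (snd p ! k' = a) * indicator (E p k') y
          = (if p = p0 \<and> k' = k then of_bool (snd p0 ! k = a) else (0::real))" by simp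
    qed
    moreover have "y 0 = v 0 ! k" using valid_y0[OF val] by (simp add: k_def)
    ultimately show ?thesis by (simp add: p0_def cyl_def indicator_def)
  qed
  have "freq \<nu> a = integral\<^sup>L \<nu> (indicator (cyl [a]))"
    by (simp add: freq_def inv_basic(3)[OF nu])
  also have "\<dots> = integral\<^sup>L \<nu> g"
  proof (rule integral_cong_AE)
    show "indicator (cyl [a]) \<in> borel_measurable \<nu>" using cylS by simp
    show "g \<in> borel_measurable \<nu>" unfolding g_def using ES by simp
    show "AE x in \<nu>. indicator (cyl [a]) x = g x" using AE_X[OF nu] by eventually_elim (rule pw)
  qed
  also have "\<dots> = (\<Sum>p\<in>B. \<Sum>k<length (snd p). of_bool (snd p ! k = a) * measure \<nu> (E p k))"
    unfolding g_def using integrable_ind[OF nu ES] by (simp add: inv_basic(3)[OF nu])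
  also have "\<dots> = (\<Sum>p\<in>B. \<Sum>k<length (snd p). of_bool (snd p ! k = a) * measure \<nu> (Acyl \<sigma> [p]))"
    unfolding E_def using inv_sh[OF nu AcS] by simp
  also have "\<dots> = (\<Sum>p\<in>B. real (count_list (snd p) a) * measure \<nu> (Acyl \<sigma> [p]))"
    by (simp add: count_list_sum sum_distrib_right)
  finally show ?thesis by (simp add: B_def)
qed

lemma freq_sum:
  fixes \<sigma> :: "('a::finite) rsub"
  assumes nu: "\<nu> \<in> inv_measures \<sigma>"
  shows "(\<Sum>a\<in>UNIV. freq \<nu> a) = 1"
proof -
  interpret P: prob_space \<nu> by (rule inv_basic(1)[OF nu])
  have cylS: "cyl [a] \<in> sets \<nu>" for a
    by (rule closed_sets[OF closed_PT_dep[of "{0}"] nu]) (auto simp: cyl_def)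
  have "(\<Sum>a\<in>UNIV. freq \<nu> a) = integral\<^sup>L \<nu> (\<lambda>y. \<Sum>a\<in>UNIV. indicator (cyl [a]) y)"
    using integrable_ind[OF nu cylS] by (simp add: freq_def measure_ind[OF nu] inv_basic(3)[OF nu])
  also have "\<dots> = integral\<^sup>L \<nu> (\<lambda>y. 1)"
  proof (rule Bochner_Integration.integral_cong)
    fix y :: "int \<Rightarrow> 'a"
    have "(\<Sum>a\<in>UNIV. indicator (cyl [a]) y :: real) = (\<Sum>a\<in>UNIV. if a = y 0 then 1 else 0)"
      by (intro sum.cong) (auto simp: cyl_def indicator_def)
    then show "(\<Sum>a\<in>UNIV. indicator (cyl [a]) y :: real) = 1" by (simp add: sum.delta')
  qed simp
  also have "\<dots> = 1" using P.prob_space by simp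
  finally show ?thesis .
qed

lemma sum_count_list: "(\<Sum>a\<in>(UNIV::'a::finite set). real (count_list u a)) = real (length u)"
proof (induction u)
  case (Cons x u)
  have "(\<Sum>a\<in>(UNIV::'a set). real (count_list (x # u) a))
      = (\<Sum>a\<in>UNIV. real (count_list u a)) + (\<Sum>a\<in>(UNIV::'a set). if x = a then 1 else 0)"
  proof -
    have eq: "(\<lambda>a. real (count_list (x # u) a)) = (\<lambda>a. real (count_list u a) + (if x = a then 1 else 0))"
      by (rule ext) simp
    show ?thesis by (simp only: eq sum.distrib)
  qed
  also have "(\<Sum>a\<in>(UNIV::'a set). if x = a then 1 else 0) = (1::real)" by (simp add: sum.delta)
  finally show ?case using Cons by simp
qed simp

lemma measure_cyl_Nil: "\<mu> \<in> inv_measures \<sigma> \<Longrightarrow> measure \<mu> (cyl []) = 1"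
proof -
  assume mu: "\<mu> \<in> inv_measures \<sigma>"
  interpret P: prob_space \<mu> by (rule inv_basic(1)[OF mu])
  have "cyl [] = space \<mu>" using inv_basic(3)[OF mu] by (simp add: cyl_def)
  then show ?thesis using P.prob_space by simp
qed

lemma induced_Acyl: "induced \<sigma> \<nu> (Acyl \<sigma> w) = measure \<nu> (Acyl \<sigma> w) / measure \<nu> (Aset \<sigma>)"
proof -
  have "Acyl \<sigma> w \<inter> Aset \<sigma> = Acyl \<sigma> w" using Acyl_sub_A by blast
  then show ?thesis by (simp add: induced_def)
qed

lemma listset_single: "listset [A] = (\<lambda>x. [x]) ` A"
  by simp

lemma Bset_Sigma: "Bset \<sigma> = Sigma UNIV \<sigma>"
  by (auto simp: Bset_def)

lemma part1:
  fixes \<sigma> :: "('a::finite) rsub"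
  assumes rs: "random_subst \<sigma>" and rec: "recognisable \<sigma>" and mu: "\<mu> \<in> inv_measures \<sigma>"
    and nu: "\<nu> \<in> inv_measures \<sigma>" and ds: "desub_to \<sigma> \<nu> \<mu>" and mp: "in_MP \<sigma> P \<nu>"
  shows "freq \<nu> a = (1 / lam \<sigma> \<mu> P) * (\<Sum>b\<in>UNIV. MP \<sigma> P a b * freq \<mu> b)"
proof -
  define c where "c = measure \<nu> (Aset \<sigma>)"
  have "desub_cyl \<sigma> \<nu> [] = measure \<mu> (cyl [])" using ds by (simp add: desub_to_def)
  then have "induced \<sigma> \<nu> (Aset \<sigma>) = 1" using measure_cyl_Nil[OF mu] by (simp add: desub_cyl_def)
  then have c0: "c \<noteq> 0" by (auto simp: induced_def c_def)
  have finS: "finite (\<sigma> b)" for b using rs by (simp add: random_subst_def)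
  have sumb: "(\<Sum>u\<in>\<sigma> b. induced \<sigma> \<nu> (Acyl \<sigma> [(b, u)])) = freq \<mu> b" for b
  proof -
    have "desub_cyl \<sigma> \<nu> [b] = measure \<mu> (cyl [b])" using ds by (simp add: desub_to_def)
    moreover have "desub_cyl \<sigma> \<nu> [b] = (\<Sum>u\<in>\<sigma> b. induced \<sigma> \<nu> (Acyl \<sigma> [(b, u)]))"
      unfolding desub_cyl_def by (simp add: sum.reindex inj_on_def)
    ultimately show ?thesis by (simp add: freq_def)
  qed
  have mAc: "measure \<nu> (Acyl \<sigma> [(b, u)]) = c * (P u b * freq \<mu> b)" if "u \<in> \<sigma> b" for b u
  proof -
    have "induced \<sigma> \<nu> (Acyl \<sigma> [(b, u)]) = P u b * freq \<mu> b"
      using mp that sumb by (simp add: in_MP_def)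
    then show ?thesis using c0 by (simp add: induced_Acyl c_def field_simps)
  qed
  define R where "R = (\<lambda>a. \<Sum>b\<in>UNIV. MP \<sigma> P a b * freq \<mu> b)"
  have fr: "freq \<nu> a = c * R a" for a
  proof -
    have "freq \<nu> a = (\<Sum>p\<in>Bset \<sigma>. real (count_list (snd p) a) * measure \<nu> (Acyl \<sigma> [p]))"
      by (rule counting[OF rs rec nu])
    also have "\<dots> = (\<Sum>b\<in>UNIV. \<Sum>u\<in>\<sigma> b. real (count_list u a) * measure \<nu> (Acyl \<sigma> [(b, u)]))"
    proof -
      define h where "h = (\<lambda>p. real (count_list (snd p) a) * measure \<nu> (Acyl \<sigma> [p]))"
      have "(\<Sum>b\<in>UNIV. \<Sum>u\<in>\<sigma> b. h (b, u)) = (\<Sum>(b, u)\<in>Sigma UNIV \<sigma>. h (b, u))"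
        by (rule sum.Sigma) (auto simp: finS)
      moreover have "(\<lambda>(b, u). h (b, u)) = h" by (rule ext) (simp add: split_def)
      ultimately show ?thesis unfolding Bset_Sigma by (simp add: h_def)
    qed
    also have "\<dots> = (\<Sum>b\<in>UNIV. \<Sum>u\<in>\<sigma> b. c * (P u b * real (count_list u a) * freq \<mu> b))"
      by (intro sum.cong refl) (simp add: mAc)
    also have "\<dots> = c * R a"
      by (simp add: R_def MP_def sum_distrib_left sum_distrib_right mult.assoc)
    finally show ?thesis .
  qed
  have "(\<Sum>a\<in>UNIV. R a) = lam \<sigma> \<mu> P"
  proof -
    have "(\<Sum>a\<in>UNIV. R a) = (\<Sum>b\<in>UNIV. \<Sum>a\<in>UNIV. MP \<sigma> P a b * freq \<mu> b)"
      unfolding R_def by (rule sum.swap)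
    also have "\<dots> = (\<Sum>b\<in>UNIV. freq \<mu> b * (\<Sum>u\<in>\<sigma> b. P u b * (\<Sum>a\<in>UNIV. real (count_list u a))))"
    proof (rule sum.cong[OF refl])
      fix b
      have "(\<Sum>a\<in>UNIV. MP \<sigma> P a b * freq \<mu> b) = (\<Sum>a\<in>UNIV. MP \<sigma> P a b) * freq \<mu> b"
        by (rule sum_distrib_right[symmetric])
      also have "(\<Sum>a\<in>UNIV. MP \<sigma> P a b) = (\<Sum>a\<in>UNIV. \<Sum>u\<in>\<sigma> b. P u b * real (count_list u a))"
        by (simp only: MP_def)
      also have "\<dots> = (\<Sum>u\<in>\<sigma> b. \<Sum>a\<in>UNIV. P u b * real (count_list u a))"
        by (rule sum.swap)
      also have "\<dots> = (\<Sum>u\<in>\<sigma> b. P u b * (\<Sum>a\<in>UNIV. real (count_list u a)))"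
        by (simp only: sum_distrib_left)
      finally show "(\<Sum>a\<in>UNIV. MP \<sigma> P a b * freq \<mu> b) = freq \<mu> b * (\<Sum>u\<in>\<sigma> b. P u b * (\<Sum>a\<in>UNIV. real (count_list u a)))"
        by (simp only: mult.commute)
    qed
    also have "\<dots> = lam \<sigma> \<mu> P" by (simp add: sum_count_list lam_def)
    finally show ?thesis .
  qed
  moreover have "(\<Sum>a\<in>UNIV. freq \<nu> a) = 1" by (rule freq_sum[OF nu])
  ultimately have "c * lam \<sigma> \<mu> P = 1" by (simp add: fr flip: sum_distrib_left)
  then have "c = 1 / lam \<sigma> \<mu> P"
    by (metis mult_eq_0_iff nonzero_eq_divide_eq zero_neq_one)
  then show ?thesis using fr by (simp add: R_def)
qed

lemma closed_vimage_sh: "closedin PT C \<Longrightarrow> closedin PT (sh k -` C)"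
  using closedin_continuous_map_preimage[OF cont_sh[of k], of C] by (simp add: vimage_def)

lemma Acyl_eq_of_valid:
  assumes rs: "random_subst \<sigma>" and rec: "recognisable \<sigma>"
    and y1: "y \<in> Acyl \<sigma> w" and y2: "y \<in> Acyl \<sigma> w'" and l: "length w = length w'"
  shows "w = w'"
proof -
  obtain x v where xv: "valid \<sigma> y x v 0"
    "\<forall>i<length w. x (int i) = fst (w ! i) \<and> v (int i) = snd (w ! i)"
    using Acyl_valid0[OF rs y1] by blast
  obtain x' v' where xv': "valid \<sigma> y x' v' 0"
    "\<forall>i<length w'. x' (int i) = fst (w' ! i) \<and> v' (int i) = snd (w' ! i)"
    using Acyl_valid0[OF rs y2] by blast
  have yX: "y \<in> subshift \<sigma>" using y1 A_sub_X[OF rs] Acyl_sub_A by blast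
  have "x = x' \<and> v = v' \<and> (0::int) = 0" by (rule rec_uniq[OF rec yX xv(1) xv'(1)])
  then show ?thesis using xv(2) xv'(2) l by (auto intro!: nth_equalityI simp: prod_eq_iff)
qed

lemma compl_Acyl:
  fixes \<sigma> :: "('a::finite) rsub"
  assumes rs: "random_subst \<sigma>" and rec: "recognisable \<sigma>"
  shows "subshift \<sigma> - Acyl \<sigma> w = subshift \<sigma> \<inter>
     ((\<Union>p\<in>Bset \<sigma>. \<Union>k\<in>{1..<length (snd p)}. sh (- int k) -` Acyl \<sigma> [p])
      \<union> (\<Union>w'\<in>{w'. set w' \<subseteq> Bset \<sigma> \<and> length w' = length w \<and> w' \<noteq> w}. Acyl \<sigma> w'))"
  (is "?L = subshift \<sigma> \<inter> (?Q \<union> ?R)")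
proof
  show "?L \<subseteq> subshift \<sigma> \<inter> (?Q \<union> ?R)"
  proof
    fix y assume y: "y \<in> ?L"
    then have yX: "y \<in> subshift \<sigma>" and yn: "y \<notin> Acyl \<sigma> w" by auto
    obtain x v k where val: "valid \<sigma> y x v k" using rec_ex[OF rec yX] by blast
    show "y \<in> subshift \<sigma> \<inter> (?Q \<union> ?R)"
    proof (cases "k = 0")
      case False
      define kn where "kn = nat k"
      have kk: "k = int kn" "1 \<le> kn" "kn < length (v 0)" using val False by (auto simp: valid_def kn_def)
      have "(x 0, v 0) \<in> Bset \<sigma>" using val by (auto simp: valid_def Bset_def)
      moreover have "y \<in> sh (- int kn) -` Acyl \<sigma> [(x 0, v 0)]" using valid_Acyl[OF val] kk by simp
      ultimately have "y \<in> ?Q" using kk by force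
      then show ?thesis using yX by blast
    next
      case True
      define w' where "w' = map (\<lambda>i. (x (int i), v (int i))) [0..<length w]"
      have yA: "y \<in> Acyl \<sigma> w'"
        using val True unfolding Acyl_def valid_def w'_def by auto
      have "set w' \<subseteq> Bset \<sigma>" using val by (auto simp: w'_def valid_def Bset_def)
      moreover have "length w' = length w" by (simp add: w'_def)
      moreover have "w' \<noteq> w" using yA yn by blast
      ultimately have "y \<in> ?R" using yA by blast
      then show ?thesis using yX by blast
    qed
  qed
next
  show "subshift \<sigma> \<inter> (?Q \<union> ?R) \<subseteq> ?L"
  proof
    fix y assume y: "y \<in> subshift \<sigma> \<inter> (?Q \<union> ?R)"
    then have yX: "y \<in> subshift \<sigma>" by blast
    have "y \<notin> Acyl \<sigma> w"
    proof
      assume yw: "y \<in> Acyl \<sigma> w"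
      obtain x v where xv: "valid \<sigma> y x v 0" using Acyl_valid0[OF rs yw] by blast
      show False
      proof (cases "y \<in> ?Q")
        case True
        then obtain p k where pk: "p \<in> Bset \<sigma>" "k \<in> {1..<length (snd p)}" "sh (- int k) y \<in> Acyl \<sigma> [p]"
          by blast
        obtain b u where p: "p = (b, u)" by (cases p)
        have h: "sh (- int k) y \<in> Acyl \<sigma> [(b, u)]" "0 \<le> int k" "int k < int (length u)"
          using pk p by auto
        obtain x' v' where "valid \<sigma> y x' v' (int k)"
          using Acyl_valid[OF h] by blast
        then have "x = x' \<and> v = v' \<and> 0 = int k" by (rule rec_uniq[OF rec yX xv])
        then show False using pk by auto
      next
        case False
        then have "y \<in> ?R" using y by blast
        then obtain w' where "length w' = length w" "w' \<noteq> w" "y \<in> Acyl \<sigma> w'" by blast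
        then show False using Acyl_eq_of_valid[OF rs rec yw] by metis
      qed
    qed
    then show "y \<in> ?L" using yX by blast
  qed
qed

lemma closed_compl:
  fixes \<sigma> :: "('a::finite) rsub"
  assumes rs: "random_subst \<sigma>" and rec: "recognisable \<sigma>"
  shows "closedin PT (subshift \<sigma> - Acyl \<sigma> w)"
proof -
  have finB: "finite (Bset \<sigma>)" by (rule finite_Bset[OF rs])
  have cQ: "closedin PT (\<Union>p\<in>Bset \<sigma>. \<Union>k\<in>{1..<length (snd p)}. sh (- int k) -` Acyl \<sigma> [p])"
    using finB by (intro closedin_Union) (auto intro!: closedin_Union closed_vimage_sh closed_Acyl[OF rs])
  have finW: "finite {w'. set w' \<subseteq> Bset \<sigma> \<and> length w' = length w \<and> w' \<noteq> w}"
    by (rule finite_subset[OF _ finite_lists_length_eq[OF finB, of "length w"]]) auto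
  have cR: "closedin PT (\<Union>w'\<in>{w'. set w' \<subseteq> Bset \<sigma> \<and> length w' = length w \<and> w' \<noteq> w}. Acyl \<sigma> w')"
    using finW by (intro closedin_Union) (auto intro!: closed_Acyl[OF rs])
  show ?thesis unfolding compl_Acyl[OF rs rec]
    by (intro closedin_Int closedin_Un closed_X cQ cR)
qed

lemma return_time_eq:
  assumes rs: "random_subst \<sigma>" and rec: "recognisable \<sigma>" and yA: "y \<in> Aset \<sigma>"
    and val: "valid \<sigma> y x v 0"
  shows "return_time \<sigma> y = length (v 0)"
  unfolding return_time_def
proof (rule the_equality)
  show "\<exists>x' v'. x' \<in> subshift \<sigma> \<and> (\<forall>i. v' i \<in> \<sigma> (x' i)) \<and> is_concat v' y \<and> length (v 0) = length (v' 0)"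
    using val by (auto simp: valid_def)
next
  fix n assume "\<exists>x' v'. x' \<in> subshift \<sigma> \<and> (\<forall>i. v' i \<in> \<sigma> (x' i)) \<and> is_concat v' y \<and> n = length (v' 0)"
  then obtain x' v' where xv': "x' \<in> subshift \<sigma>" "\<forall>i. v' i \<in> \<sigma> (x' i)" "is_concat v' y" "n = length (v' 0)"
    by blast
  have "v' 0 \<noteq> []" using xv'(2) rs by (metis random_subst_def)
  then have "valid \<sigma> y x' v' 0" using xv' by (simp add: valid_def)
  moreover have yX: "y \<in> subshift \<sigma>" using yA A_sub_X[OF rs] by blast
  ultimately have "v = v'" using rec_uniq[OF rec yX val] by blast
  then show "n = length (v 0)" using xv'(4) by simp
qed

lemma no_return:
  assumes rs: "random_subst \<sigma>" and rec: "recognisable \<sigma>" and yA: "y \<in> Aset \<sigma>"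
    and val: "valid \<sigma> y x v 0" and i: "0 < i" "i < length (v 0)"
  shows "sh (int i) y \<notin> Aset \<sigma>"
proof
  assume A: "sh (int i) y \<in> Aset \<sigma>"
  obtain x' v' where xv': "valid \<sigma> (sh (int i) y) x' v' 0" using Acyl_valid0[OF rs A] by blast
  have eq: "(\<lambda>n. sh (int i) y (n - int i)) = y" by (simp add: sh_def)
  have "valid \<sigma> (sh (int i) y) x v (int i)" using val i unfolding valid_def eq by simp
  moreover have "sh (int i) y \<in> subshift \<sigma>" using A A_sub_X[OF rs] by blast
  ultimately have "x' = x \<and> v' = v \<and> 0 = int i" using rec_uniq[OF rec _ xv'] by blast
  then show False using i by simp
qed

lemma transfer_basic:
  assumes "is_transfer \<sigma> P \<mu> m \<nu>"
  shows "prob_space m" "sets m = sets Bor" "emeasure m (Aset \<sigma>) = 1" "\<nu> \<in> inv_measures \<sigma>"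
    "\<forall>w\<in>lists (Bset \<sigma>). measure m (Acyl \<sigma> w)
            = measure \<mu> (cyl (map fst w)) * prod_list (map (\<lambda>(a, v). P v a) w)"
    "\<And>f. continuous_map PT euclideanreal f \<Longrightarrow>
        (\<integral>x. f x \<partial>\<nu>) = (1 / lam \<sigma> \<mu> P) *
           (\<integral>y. indicator (Aset \<sigma>) y * (\<Sum>i<return_time \<sigma> y. f ((shift ^^ i) y)) \<partial>m)"
  using assms by (auto simp: is_transfer_def is_thetaP_def)

lemma transfer_Acyl:
  fixes \<sigma> :: "('a::finite) rsub"
  assumes rs: "random_subst \<sigma>" and rec: "recognisable \<sigma>" and tr: "is_transfer \<sigma> P \<mu> m \<nu>"
  shows "measure \<nu> (Acyl \<sigma> w) = (1 / lam \<sigma> \<mu> P) * measure m (Acyl \<sigma> w)"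
proof -
  note tb = transfer_basic[OF tr]
  have nu: "\<nu> \<in> inv_measures \<sigma>" by (rule tb(4))
  have spm: "space m = UNIV" using sets_eq_imp_space_eq[OF tb(2)] by simp
  have c1: "closedin PT (Acyl \<sigma> w)" by (rule closed_Acyl[OF rs])
  have c2: "closedin PT (subshift \<sigma> - Acyl \<sigma> w)" by (rule closed_compl[OF rs rec])
  have dj: "disjnt (Acyl \<sigma> w) (subshift \<sigma> - Acyl \<sigma> w)" by (simp add: disjnt_def)
  obtain f :: "(int \<Rightarrow> 'a) \<Rightarrow> real" where fc: "continuous_map PT euclideanreal f"
    and f1: "f ` Acyl \<sigma> w \<subseteq> {1}" and f0: "f ` (subshift \<sigma> - Acyl \<sigma> w) \<subseteq> {0}"
    using Urysohn_lemma_alt[OF normal_PT c1 c2 dj, of 1 0] by blast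
  have AX: "Acyl \<sigma> w \<subseteq> subshift \<sigma>" using Acyl_sub_A A_sub_X[OF rs] by blast
  have fX: "f y = indicator (Acyl \<sigma> w) y" if "y \<in> subshift \<sigma>" for y
    using that f1 f0 by (cases "y \<in> Acyl \<sigma> w") (auto simp: indicator_def)
  have AcS: "Acyl \<sigma> w \<in> sets \<nu>" by (rule closed_sets[OF c1 nu])
  have "(\<integral>x. f x \<partial>\<nu>) = integral\<^sup>L \<nu> (indicator (Acyl \<sigma> w))"
  proof (rule integral_cong_AE)
    show "f \<in> borel_measurable \<nu>"
      using cont_meas_real[OF fc] measurable_cong_sets[OF inv_basic(2)[OF nu] refl] by blast
    show "indicator (Acyl \<sigma> w) \<in> borel_measurable \<nu>" using AcS by simp
    show "AE x in \<nu>. f x = indicator (Acyl \<sigma> w) x" using AE_X[OF nu] by eventually_elim (rule fX)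
  qed
  also have "\<dots> = measure \<nu> (Acyl \<sigma> w)" by (simp add: inv_basic(3)[OF nu])
  finally have lhs: "(\<integral>x. f x \<partial>\<nu>) = measure \<nu> (Acyl \<sigma> w)" .
  have pw: "indicator (Aset \<sigma>) y * (\<Sum>i<return_time \<sigma> y. f ((shift ^^ i) y)) = indicator (Acyl \<sigma> w) y"
    for y
  proof (cases "y \<in> Aset \<sigma>")
    case False
    then have "y \<notin> Acyl \<sigma> w" using Acyl_sub_A by blast
    then show ?thesis using False by simp
  next
    case True
    obtain x v where val: "valid \<sigma> y x v 0" using Acyl_valid0[OF rs True] by blast
    have r: "return_time \<sigma> y = length (v 0)" by (rule return_time_eq[OF rs rec True val])
    have l: "0 < length (v 0)" using val by (simp add: valid_def)
    then obtain r' where r': "length (v 0) = Suc r'" using gr0_implies_Suc by blast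
    have yX: "y \<in> subshift \<sigma>" using True A_sub_X[OF rs] by blast
    have z: "f ((shift ^^ Suc i) y) = 0" if "i < r'" for i
    proof -
      have "sh (int (Suc i)) y \<notin> Aset \<sigma>"
        by (rule no_return[OF rs rec True val]) (use that r' in auto)
      then have "sh (int (Suc i)) y \<in> subshift \<sigma> - Acyl \<sigma> w"
        using X_sh[OF yX] Acyl_sub_A by blast
      then have "f (sh (int (Suc i)) y) \<in> {0}" using f0 by blast
      then show ?thesis unfolding shift_pow by simp
    qed
    have "(\<Sum>i<return_time \<sigma> y. f ((shift ^^ i) y)) = f y + (\<Sum>i<r'. f ((shift ^^ Suc i) y))"
      unfolding r r' by (simp only: sum.lessThan_Suc_shift funpow_0 id_apply)
    also have "\<dots> = f y" using z by simp
    also have "\<dots> = indicator (Acyl \<sigma> w) y" by (rule fX[OF yX])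
    finally show ?thesis using True by simp
  qed
  have "(\<integral>y. indicator (Aset \<sigma>) y * (\<Sum>i<return_time \<sigma> y. f ((shift ^^ i) y)) \<partial>m)
       = integral\<^sup>L m (indicator (Acyl \<sigma> w))"
    using pw by simp
  also have "\<dots> = measure m (Acyl \<sigma> w)" by (simp add: spm)
  finally show ?thesis using tb(6)[OF fc] lhs by simp
qed

lemma transfer_lam:
  fixes \<sigma> :: "('a::finite) rsub"
  assumes tr: "is_transfer \<sigma> P \<mu> m \<nu>"
  shows "lam \<sigma> \<mu> P \<noteq> 0"
proof
  assume l: "lam \<sigma> \<mu> P = 0"
  note tb = transfer_basic[OF tr]
  interpret N: prob_space \<nu> by (rule inv_basic(1)[OF tb(4)])
  have "continuous_map PT euclideanreal (\<lambda>_::int \<Rightarrow> 'a. 1::real)" by simp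
  from tb(6)[OF this] have "(\<integral>x. 1 \<partial>\<nu>) = (0::real)" using l by simp
  then show False using N.prob_space by simp
qed

lemma listset_mem:
  "vs \<in> listset (map \<sigma> u) \<Longrightarrow> length vs = length u \<and> (\<forall>i<length u. vs ! i \<in> \<sigma> (u ! i))"
proof (induction u arbitrary: vs)
  case Nil then show ?case by simp
next
  case (Cons c u)
  then obtain x xs where vs: "vs = x # xs" "x \<in> \<sigma> c" "xs \<in> listset (map \<sigma> u)"
    by (auto simp: set_Cons_def)
  then have ih: "length xs = length u \<and> (\<forall>i<length u. xs ! i \<in> \<sigma> (u ! i))" using Cons.IH by blast
  have l: "length vs = length (c # u)" using vs ih by simp
  have n: "vs ! i \<in> \<sigma> ((c # u) ! i)" if "i < length (c # u)" for i
    using vs ih that by (cases i) auto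
  show ?case using l n by blast
qed

lemma zip_lists:
  assumes "vs \<in> listset (map \<sigma> u)"
  shows "zip u vs \<in> lists (Bset \<sigma>)" "map fst (zip u vs) = u"
proof -
  have h: "length vs = length u" "\<forall>i<length u. vs ! i \<in> \<sigma> (u ! i)" using listset_mem[OF assms] by auto
  show "zip u vs \<in> lists (Bset \<sigma>)"
    unfolding in_lists_conv_set
  proof
    fix z assume "z \<in> set (zip u vs)"
    then obtain i where "i < length u" "z = (u ! i, vs ! i)" using h(1) by (auto simp: set_zip)
    then show "z \<in> Bset \<sigma>" using h(2) by (auto simp: Bset_def)
  qed
  show "map fst (zip u vs) = u" using h(1) by simp
qed

lemma set_Cons_img: "set_Cons A L = (\<lambda>(x, xs). x # xs) ` (A \<times> L)"
  by (auto simp: set_Cons_def)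

lemma sum_prod_choice:
  assumes pc: "prob_choice \<sigma> P"
  shows "(\<Sum>vs\<in>listset (map \<sigma> u). prod_list (map (\<lambda>(a, v). P v a) (zip u vs))) = 1"
proof (induction u)
  case Nil then show ?case by simp
next
  case (Cons c u)
  define L where "L = listset (map \<sigma> u)"
  define g where "g = (\<lambda>vs. prod_list (map (\<lambda>(a, v). P v a) (zip u vs)))"
  have inj: "inj_on (\<lambda>(x, xs). x # xs) (\<sigma> c \<times> L)" by (auto simp: inj_on_def)
  have "(\<Sum>vs\<in>listset (map \<sigma> (c # u)). prod_list (map (\<lambda>(a, v). P v a) (zip (c # u) vs)))
      = (\<Sum>vs\<in>(\<lambda>(x, xs). x # xs) ` (\<sigma> c \<times> L). prod_list (map (\<lambda>(a, v). P v a) (zip (c # u) vs)))"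
    by (simp add: set_Cons_img L_def)
  also have "\<dots> = (\<Sum>(x, xs)\<in>\<sigma> c \<times> L. P x c * g xs)"
    by (subst sum.reindex[OF inj]) (simp add: g_def case_prod_beta)
  also have "\<dots> = (\<Sum>x\<in>\<sigma> c. \<Sum>xs\<in>L. P x c * g xs)"
    by (rule sum.cartesian_product[symmetric])
  also have "\<dots> = (\<Sum>x\<in>\<sigma> c. P x c * (\<Sum>xs\<in>L. g xs))"
    by (simp add: sum_distrib_left)
  also have "\<dots> = (\<Sum>x\<in>\<sigma> c. P x c)" using Cons.IH by (simp add: L_def g_def)
  also have "\<dots> = 1" using pc by (simp add: prob_choice_def)
  finally show ?case .
qed

lemma part2:
  fixes \<sigma> :: "('a::finite) rsub"
  assumes rs: "random_subst \<sigma>" and rec: "recognisable \<sigma>" and pc: "prob_choice \<sigma> P"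
    and tr: "is_transfer \<sigma> P \<mu> m \<nu>"
  shows "desub_to \<sigma> \<nu> \<mu> \<and> in_MP \<sigma> P \<nu>"
proof -
  note tb = transfer_basic[OF tr]
  have nu: "\<nu> \<in> inv_measures \<sigma>" by (rule tb(4))
  have l0: "1 / lam \<sigma> \<mu> P \<noteq> 0" using transfer_lam[OF tr] by simp
  have mA: "measure m (Aset \<sigma>) = 1" using tb(3) by (simp add: measure_def)
  have ind: "induced \<sigma> \<nu> (Acyl \<sigma> w) = measure m (Acyl \<sigma> w)" for w
  proof -
    have "induced \<sigma> \<nu> (Acyl \<sigma> w) = ((1 / lam \<sigma> \<mu> P) * measure m (Acyl \<sigma> w)) / ((1 / lam \<sigma> \<mu> P) * 1)"
      unfolding induced_Acyl transfer_Acyl[OF rs rec tr] mA by simp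
    then show ?thesis using l0 by simp
  qed
  have mw: "measure m (Acyl \<sigma> (zip u vs)) = measure \<mu> (cyl u) * prod_list (map (\<lambda>(a, v). P v a) (zip u vs))"
    if "vs \<in> listset (map \<sigma> u)" for u vs
    using tb(5) zip_lists[OF that] by metis
  have "desub_to \<sigma> \<nu> \<mu>"
    unfolding desub_to_def
  proof
    fix u
    have "desub_cyl \<sigma> \<nu> u = (\<Sum>vs\<in>listset (map \<sigma> u). measure \<mu> (cyl u) * prod_list (map (\<lambda>(a, v). P v a) (zip u vs)))"
      unfolding desub_cyl_def ind by (rule sum.cong[OF refl mw])
    also have "\<dots> = measure \<mu> (cyl u)"
      by (simp add: sum_distrib_left[symmetric] sum_prod_choice[OF pc])
    finally show "desub_cyl \<sigma> \<nu> u = measure \<mu> (cyl u)" .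
  qed
  moreover have "in_MP \<sigma> P \<nu>"
    unfolding in_MP_def
  proof (intro conjI nu allI ballI)
    fix a v assume v: "v \<in> \<sigma> a"
    have one: "induced \<sigma> \<nu> (Acyl \<sigma> [(a, u)]) = measure \<mu> (cyl [a]) * P u a" if "u \<in> \<sigma> a" for u
    proof -
      have "[u] \<in> listset (map \<sigma> [a])" using that by simp
      from mw[OF this] show ?thesis by (simp add: ind)
    qed
    have "(\<Sum>u\<in>\<sigma> a. induced \<sigma> \<nu> (Acyl \<sigma> [(a, u)])) = (\<Sum>u\<in>\<sigma> a. measure \<mu> (cyl [a]) * P u a)"
      by (rule sum.cong[OF refl one])
    also have "\<dots> = measure \<mu> (cyl [a])"
      using pc by (simp add: sum_distrib_left[symmetric] prob_choice_def)
    finally show "induced \<sigma> \<nu> (Acyl \<sigma> [(a, v)]) = P v a * (\<Sum>u\<in>\<sigma> a. induced \<sigma> \<nu> (Acyl \<sigma> [(a, u)]))"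
      using one[OF v] by simp
  qed
  ultimately show ?thesis by blast
qed

theorem mainTheorem8:
  fixes \<sigma> :: "('a::finite) rsub" and \<mu> :: "(int \<Rightarrow> 'a) measure"
    and P :: "'a list \<Rightarrow> 'a \<Rightarrow> real"
  assumes "random_subst \<sigma>" and "primitive \<sigma>" and "geom_compatible \<sigma>"
    and "recognisable \<sigma>"
    and "\<mu> \<in> inv_measures \<sigma>" and "prob_choice \<sigma> P"
  shows "(\<forall>\<nu>. \<nu> \<in> inv_measures \<sigma> \<and> desub_to \<sigma> \<nu> \<mu> \<and> in_MP \<sigma> P \<nu> \<longrightarrow>
            (\<forall>a. freq \<nu> a = (1 / lam \<sigma> \<mu> P) * (\<Sum>b\<in>UNIV. MP \<sigma> P a b * freq \<mu> b)))
       \<and> (\<forall>m \<nu>. is_transfer \<sigma> P \<mu> m \<nu> \<longrightarrow>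
            desub_to \<sigma> \<nu> \<mu> \<and> in_MP \<sigma> P \<nu> \<and>
            (\<forall>a. freq \<nu> a = (1 / lam \<sigma> \<mu> P) * (\<Sum>b\<in>UNIV. MP \<sigma> P a b * freq \<mu> b)))
       \<and> (\<forall>\<mu>' m \<nu> m' \<nu>'. \<mu>' \<in> inv_measures \<sigma> \<and> (\<forall>a. freq \<mu> a = freq \<mu>' a) \<and>
            is_transfer \<sigma> P \<mu> m \<nu> \<and> is_transfer \<sigma> P \<mu>' m' \<nu>' \<longrightarrow>
            (\<forall>a. freq \<nu> a = freq \<nu>' a))"
proof (intro conjI allI impI)
  note rs = assms(1) and rec = assms(4) and mu = assms(5) and pc = assms(6)
  show "freq \<nu> a = (1 / lam \<sigma> \<mu> P) * (\<Sum>b\<in>UNIV. MP \<sigma> P a b * freq \<mu> b)"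
    if "\<nu> \<in> inv_measures \<sigma> \<and> desub_to \<sigma> \<nu> \<mu> \<and> in_MP \<sigma> P \<nu>" for \<nu> a
    using part1[OF rs rec mu] that by blast
  fix m \<nu> assume tr: "is_transfer \<sigma> P \<mu> m \<nu>"
  show "desub_to \<sigma> \<nu> \<mu>" "in_MP \<sigma> P \<nu>" using part2[OF rs rec pc tr] by auto
  fix a
  show "freq \<nu> a = (1 / lam \<sigma> \<mu> P) * (\<Sum>b\<in>UNIV. MP \<sigma> P a b * freq \<mu> b)"
    using part1[OF rs rec mu transfer_basic(4)[OF tr]] part2[OF rs rec pc tr] by blast
next
  note rs = assms(1) and rec = assms(4) and mu = assms(5) and pc = assms(6)
  fix \<mu>' m \<nu> m' \<nu>' a
  assume H: "\<mu>' \<in> inv_measures \<sigma> \<and> (\<forall>a. freq \<mu> a = freq \<mu>' a) \<and>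
            is_transfer \<sigma> P \<mu> m \<nu> \<and> is_transfer \<sigma> P \<mu>' m' \<nu>'"
  then have mu': "\<mu>' \<in> inv_measures \<sigma>" and fe: "\<forall>a. freq \<mu> a = freq \<mu>' a"
    and tr: "is_transfer \<sigma> P \<mu> m \<nu>" and tr': "is_transfer \<sigma> P \<mu>' m' \<nu>'" by auto
  have f1: "freq \<nu> a = (1 / lam \<sigma> \<mu> P) * (\<Sum>b\<in>UNIV. MP \<sigma> P a b * freq \<mu> b)"
    using part1[OF rs rec mu transfer_basic(4)[OF tr]] part2[OF rs rec pc tr] by blast
  have f2: "freq \<nu>' a = (1 / lam \<sigma> \<mu>' P) * (\<Sum>b\<in>UNIV. MP \<sigma> P a b * freq \<mu>' b)"
    using part1[OF rs rec mu' transfer_basic(4)[OF tr']] part2[OF rs rec pc tr'] by blast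
  have "lam \<sigma> \<mu> P = lam \<sigma> \<mu>' P" using fe by (simp add: lam_def)
  then show "freq \<nu> a = freq \<nu>' a" using f1 f2 fe by simp
qed

end
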